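(* Let $H$ be a Hilbert space, let $A_1,\dots,A_n$ and $B_1,\dots,B_n$ be strictly positive bounded operators on $H$ with $\sum_{j=1}^n A_j=\sum_{j=1}^n B_j=I$, and let $\mu\in\mathbb{R}$, $\lambda>0$. Then, in the operator order, $$\sum_{j=1}^n S_{\mu-2\lambda}(A_j|B_j)\le \sum_{j=1}^n\tilde T_{\mu,2,-\lambda}(A_j|B_j)\le \sum_{j=1}^n S_{\mu-\lambda}(A_j|B_j)\le \sum_{j=1}^n\tilde T_{\mu,1,-\lambda}(A_j|B_j)\le \sum_{j=1}^n S_\mu(A_j|B_j)$$ $$\le \sum_{j=1}^n\tilde T_{\mu,1,\lambda}(A_j|B_j)\le \sum_{j=1}^n S_{\mu+\lambda}(A_j|B_j)\le \sum_{j=1}^n\tilde T_{\mu,2,\lambda}(A_j|B_j)\le \sum_{j=1}^n S_{\mu+2\lambda}(A_j|B_j).$$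
   Context: A bounded operator $T$ on $H$ is strictly positive ($T>0$) if $(Tx,x)\ge0$ for all $x$ and $T$ is invertible; $X\le Y$ means $((Y-X)x,x)\ge 0$ for all $x$. $I$ is the identity. Powers and $\log$ of strictly positive operators are defined by functional calculus. For $A>0$, $B>0$ and $\nu\in\mathbb{R}$: $A\natural_\nu B=A^{1/2}(A^{-1/2}BA^{-1/2})^{\nu}A^{1/2}$, and the generalized relative operator entropy is $S_\nu(A|B)=A^{1/2}(A^{-1/2}BA^{-1/2})^{\nu}(\log A^{-1/2}BA^{-1/2})A^{1/2}$. For $\lambda,\mu\in\mathbb{R}$, $\lambda\ne 0$, $k\in\mathbb{Z}$, the generalized Tsallis relative operator entropy is $\tilde T_{\mu,k,\lambda}(A|B)=\dfrac{A\natural_{\mu+k\lambda}B-A\natural_{\mu+(k-1)\lambda}B}{\lambda}$. *)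

theory Defs
  imports "HOL-Analysis.Analysis" "HOL-Computational_Algebra.Polynomial"
begin

text \<open>Bounded operators on a (real) Hilbert space 'a of class real_inner and complete_space are represented by the library type blinfun.\<close>

definition op_le :: "('a::real_inner \<Rightarrow>\<^sub>L 'a) \<Rightarrow> ('a \<Rightarrow>\<^sub>L 'a) \<Rightarrow> bool" where
  "op_le X Y \<longleftrightarrow> (\<forall>x. inner ((Y - X) x) x \<ge> 0)"

definition self_adjoint :: "('a::real_inner \<Rightarrow>\<^sub>L 'a) \<Rightarrow> bool" where
  "self_adjoint T \<longleftrightarrow> (\<forall>x y. inner (T x) y = inner x (T y))"

definition op_invertible :: "('a::real_normed_vector \<Rightarrow>\<^sub>L 'a) \<Rightarrow> bool" where
  "op_invertible T \<longleftrightarrow> (\<exists>S. S o\<^sub>L T = id_blinfun \<and> T o\<^sub>L S = id_blinfun)"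

definition strictly_pos :: "('a::real_inner \<Rightarrow>\<^sub>L 'a) \<Rightarrow> bool" where
  "strictly_pos T \<longleftrightarrow> self_adjoint T \<and> (\<forall>x. inner (T x) x \<ge> 0) \<and> op_invertible T"

fun op_pow :: "('a::real_normed_vector \<Rightarrow>\<^sub>L 'a) \<Rightarrow> nat \<Rightarrow> ('a \<Rightarrow>\<^sub>L 'a)" where
  "op_pow T 0 = id_blinfun"
| "op_pow T (Suc k) = T o\<^sub>L op_pow T k"

definition poly_op :: "real poly \<Rightarrow> ('a::real_normed_vector \<Rightarrow>\<^sub>L 'a) \<Rightarrow> ('a \<Rightarrow>\<^sub>L 'a)" where
  "poly_op p T = (\<Sum>i\<le>degree p. coeff p i *\<^sub>R op_pow T i)"

text \<open>Bounds of the numerical range; the spectrum of a self-adjoint operator lies in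
  [num_lo T, num_hi T].\<close>
definition num_lo :: "('a::real_inner \<Rightarrow>\<^sub>L 'a) \<Rightarrow> real" where
  "num_lo T = Inf {inner (T x) x | x. norm x = 1}"

definition num_hi :: "('a::real_inner \<Rightarrow>\<^sub>L 'a) \<Rightarrow> real" where
  "num_hi T = Sup {inner (T x) x | x. norm x = 1}"

text \<open>Continuous functional calculus of a self-adjoint operator: f(T) is the limit of
  p(T) for polynomials p converging uniformly to f on an interval containing the spectrum.\<close>
definition fcalc :: "(real \<Rightarrow> real) \<Rightarrow> ('a::real_inner \<Rightarrow>\<^sub>L 'a) \<Rightarrow> ('a \<Rightarrow>\<^sub>L 'a)" where
  "fcalc f T = (THE X. \<forall>e>0. \<exists>d>0. \<forall>p.
      (\<forall>t\<in>{num_lo T..num_hi T}. \<bar>poly p t - f t\<bar> < d) \<longrightarrow> norm (poly_op p T - X) < e)"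

definition op_rpow :: "('a::real_inner \<Rightarrow>\<^sub>L 'a) \<Rightarrow> real \<Rightarrow> ('a \<Rightarrow>\<^sub>L 'a)" where
  "op_rpow T \<nu> = fcalc (\<lambda>t. t powr \<nu>) T"

definition op_log :: "('a::real_inner \<Rightarrow>\<^sub>L 'a) \<Rightarrow> ('a \<Rightarrow>\<^sub>L 'a)" where
  "op_log T = fcalc ln T"

definition wgmean :: "real \<Rightarrow> ('a::real_inner \<Rightarrow>\<^sub>L 'a) \<Rightarrow> ('a \<Rightarrow>\<^sub>L 'a) \<Rightarrow> ('a \<Rightarrow>\<^sub>L 'a)" where
  "wgmean \<nu> A B =
     op_rpow A (1/2) o\<^sub>L
     op_rpow (op_rpow A (-1/2) o\<^sub>L B o\<^sub>L op_rpow A (-1/2)) \<nu> o\<^sub>L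
     op_rpow A (1/2)"

definition rel_entropy :: "real \<Rightarrow> ('a::real_inner \<Rightarrow>\<^sub>L 'a) \<Rightarrow> ('a \<Rightarrow>\<^sub>L 'a) \<Rightarrow> ('a \<Rightarrow>\<^sub>L 'a)" where
  "rel_entropy \<nu> A B =
     (let C = op_rpow A (-1/2) o\<^sub>L B o\<^sub>L op_rpow A (-1/2) in
      op_rpow A (1/2) o\<^sub>L op_rpow C \<nu> o\<^sub>L op_log C o\<^sub>L op_rpow A (1/2))"

definition gtsallis :: "real \<Rightarrow> int \<Rightarrow> real \<Rightarrow> ('a::real_inner \<Rightarrow>\<^sub>L 'a) \<Rightarrow> ('a \<Rightarrow>\<^sub>L 'a) \<Rightarrow> ('a \<Rightarrow>\<^sub>L 'a)" where
  "gtsallis \<mu> k l A B =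
     (1/l) *\<^sub>R (wgmean (\<mu> + of_int k * l) A B - wgmean (\<mu> + (of_int k - 1) * l) A B)"

end

theory Submission
  imports Defs
begin

lemma poly_op_ext:
  assumes "degree p \<le> N"
  shows "poly_op p T = (\<Sum>i\<le>N. coeff p i *\<^sub>R op_pow T i)"
proof -
  have "(\<Sum>i\<le>N. coeff p i *\<^sub>R op_pow T i) = (\<Sum>i\<le>degree p. coeff p i *\<^sub>R op_pow T i)"
    by (rule sum.mono_neutral_right) (use assms in \<open>auto simp: coeff_eq_0\<close>)
  then show ?thesis by (simp add: poly_op_def)
qed

lemma poly_op_pCons:
  "poly_op (pCons a p) T = a *\<^sub>R id_blinfun + (T o\<^sub>L poly_op p T)"
proof -
  have "poly_op (pCons a p) T = (\<Sum>i\<le>Suc (degree p). coeff (pCons a p) i *\<^sub>R op_pow T i)"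
    by (rule poly_op_ext) (simp add: degree_pCons_le)
  also have "\<dots> = a *\<^sub>R id_blinfun + (\<Sum>i\<le>degree p. coeff p i *\<^sub>R (T o\<^sub>L op_pow T i))"
    by (subst sum.atMost_Suc_shift) simp
  also have "(\<Sum>i\<le>degree p. coeff p i *\<^sub>R (T o\<^sub>L op_pow T i)) = T o\<^sub>L poly_op p T"
    unfolding poly_op_def
    by (simp add: bounded_bilinear.sum_right[OF bounded_bilinear_blinfun_compose]
        bounded_bilinear.scaleR_right[OF bounded_bilinear_blinfun_compose])
  finally show ?thesis .
qed

lemma poly_op_0[simp]: "poly_op 0 T = 0"
  by (simp add: poly_op_def)

lemma poly_op_const[simp]: "poly_op [:c:] T = c *\<^sub>R id_blinfun"
  using poly_op_pCons[of c 0 T] by simp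

lemma poly_op_add: "poly_op (p + q) T = poly_op p T + poly_op q T"
proof (induction p arbitrary: q)
  case 0 then show ?case by simp
next
  case (pCons a p)
  show ?case
  proof (cases q)
    case (pCons b q')
    have "poly_op (p + q') T = poly_op p T + poly_op q' T" by (rule pCons.IH)
    then show ?thesis using pCons
      by (simp add: poly_op_pCons scaleR_add_left
          bounded_bilinear.add_right[OF bounded_bilinear_blinfun_compose])
  qed
qed

lemma poly_op_smult: "poly_op (smult c p) T = c *\<^sub>R poly_op p T"
  by (induction p) (simp_all add: poly_op_pCons scaleR_add_right
      bounded_bilinear.scaleR_right[OF bounded_bilinear_blinfun_compose])

lemma poly_op_minus: "poly_op (- p) T = - poly_op p T"
  using poly_op_smult[of "-1" p T] by simp

lemma poly_op_diff: "poly_op (p - q) T = poly_op p T - poly_op q T"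
  using poly_op_add[of p "-q" T] poly_op_minus[of q T] by simp

lemma poly_op_mult: "poly_op (p * q) T = poly_op p T o\<^sub>L poly_op q T"
proof (induction p)
  case 0 then show ?case
    by (simp add: bounded_bilinear.zero_left[OF bounded_bilinear_blinfun_compose])
next
  case (pCons a p)
  have "pCons a p * q = smult a q + pCons 0 (p * q)" by simp
  then have "poly_op (pCons a p * q) T = a *\<^sub>R poly_op q T + (T o\<^sub>L poly_op (p*q) T)"
    by (simp add: poly_op_add poly_op_smult poly_op_pCons)
  also have "\<dots> = poly_op (pCons a p) T o\<^sub>L poly_op q T"
    by (rule blinfun_eqI) (simp add: poly_op_pCons pCons.IH blinfun.add_left blinfun.scaleR_left)
  finally show ?case .
qed

lemma compose_id_right[simp]: "T o\<^sub>L id_blinfun = T"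
  by (rule blinfun_eqI) simp

lemma compose_id_left[simp]: "id_blinfun o\<^sub>L T = T"
  by (rule blinfun_eqI) simp

lemma poly_op_X: "poly_op [:0,1:] T = T"
  by (simp add: poly_op_pCons)

lemma poly_op_commute: "T o\<^sub>L poly_op p T = poly_op p T o\<^sub>L T"
  using poly_op_mult[of "[:0,1:]" p T] poly_op_mult[of p "[:0,1:]" T]
  by (simp add: poly_op_X mult.commute)


definition pos :: "('a::real_inner \<Rightarrow>\<^sub>L 'a) \<Rightarrow> bool" where
  "pos X \<longleftrightarrow> (\<forall>x. 0 \<le> inner (X x) x)"

lemma sa_add: "self_adjoint S \<Longrightarrow> self_adjoint T \<Longrightarrow> self_adjoint (S + T)"
  by (simp add: self_adjoint_def blinfun.add_left inner_add_left inner_add_right)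

lemma sa_diff: "self_adjoint S \<Longrightarrow> self_adjoint T \<Longrightarrow> self_adjoint (S - T)"
  by (simp add: self_adjoint_def blinfun.diff_left inner_diff_left inner_diff_right)

lemma sa_scale: "self_adjoint S \<Longrightarrow> self_adjoint (c *\<^sub>R S)"
  by (simp add: self_adjoint_def blinfun.scaleR_left)

lemma sa_id: "self_adjoint id_blinfun"
  by (simp add: self_adjoint_def)

lemma sa_compose_commute:
  assumes "self_adjoint S" "self_adjoint T" "S o\<^sub>L T = T o\<^sub>L S"
  shows "self_adjoint (S o\<^sub>L T)"
  unfolding self_adjoint_def
proof (intro allI)
  fix x y
  have "inner (S (T x)) y = inner (T x) (S y)" using assms(1) by (simp add: self_adjoint_def)
  also have "\<dots> = inner x (T (S y))" using assms(2) by (simp add: self_adjoint_def)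
  also have "T (S y) = S (T y)" using assms(3) by (metis blinfun_apply_blinfun_compose)
  finally show "inner ((S o\<^sub>L T) x) y = inner x ((S o\<^sub>L T) y)" by simp
qed

lemma sa_poly_op: "self_adjoint T \<Longrightarrow> self_adjoint (poly_op p T)"
proof (induction p)
  case 0 then show ?case by (simp add: self_adjoint_def)
next
  case (pCons a p)
  then show ?case
    by (simp add: poly_op_pCons sa_add sa_scale sa_id sa_compose_commute poly_op_commute)
qed

lemma sandwich_pos:
  assumes "self_adjoint S" "pos L"
  shows "pos (S o\<^sub>L L o\<^sub>L S)"
  using assms by (simp add: pos_def self_adjoint_def)

lemma quad_discr:
  fixes a b c :: real
  assumes "\<And>t. 0 \<le> a + 2*b*t + c*t^2" "0 \<le> c"
  shows "b^2 \<le> a*c"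
proof (cases "c = 0")
  case True
  show ?thesis
  proof (cases "b = 0")
    case False
    have "0 \<le> a + 2*b*(-(a+1)/(2*b)) + c*(-(a+1)/(2*b))^2" by (rule assms(1))
    with False True show ?thesis by (simp add: field_simps)
  qed (simp add: True)
next
  case False
  with assms(2) have c: "c > 0" by simp
  have "0 \<le> a + 2*b*(-b/c) + c*(-b/c)^2" by (rule assms(1))
  then have "0 \<le> a - b^2/c" using c by (simp add: field_simps power2_eq_square)
  then show ?thesis using c by (simp add: field_simps)
qed

lemma pos_CS:
  assumes "self_adjoint U" "pos U"
  shows "(inner (U x) y)^2 \<le> inner (U x) x * inner (U y) y"
proof -
  have sym: "inner (U y) x = inner (U x) y"
    using assms(1) by (simp add: self_adjoint_def inner_commute)
  have "\<And>t. 0 \<le> inner (U x) x + 2 * inner (U x) y * t + inner (U y) y * t^2"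
  proof -
    fix t :: real
    have "0 \<le> inner (U (x + t *\<^sub>R y)) (x + t *\<^sub>R y)" using assms(2) by (simp add: pos_def)
    also have "\<dots> = inner (U x) x + 2 * inner (U x) y * t + inner (U y) y * t^2"
      by (simp add: blinfun.add_right blinfun.scaleR_right inner_add_left inner_add_right sym
          algebra_simps power2_eq_square)
    finally show "0 \<le> inner (U x) x + 2 * inner (U x) y * t + inner (U y) y * t^2" .
  qed
  then show ?thesis using quad_discr assms(2) by (simp add: pos_def)
qed

lemma UdU_pos:
  assumes "self_adjoint U" "pos U" "\<And>x. inner (U x) x \<le> d * (norm x)^2"
  shows "pos (U o\<^sub>L (d *\<^sub>R id_blinfun - U))"
  unfolding pos_def
proof
  fix x
  have e: "inner ((U o\<^sub>L (d *\<^sub>R id_blinfun - U)) x) x = d * inner (U x) x - inner (U x) (U x)"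
  proof -
    have "inner ((U o\<^sub>L (d *\<^sub>R id_blinfun - U)) x) x = inner (d *\<^sub>R x - U x) (U x)"
      using assms(1) by (simp add: self_adjoint_def blinfun.diff_left blinfun.scaleR_left)
    also have "\<dots> = d * inner x (U x) - inner (U x) (U x)"
      by (simp add: inner_diff_left)
    finally show ?thesis by (simp add: inner_commute)
  qed
  have cs: "(inner (U x) (U x))^2 \<le> inner (U x) x * inner (U (U x)) (U x)"
    by (rule pos_CS[OF assms(1,2)])
  have b: "inner (U (U x)) (U x) \<le> d * inner (U x) (U x)"
    using assms(3)[of "U x"] by (simp add: power2_norm_eq_inner)
  have ux: "0 \<le> inner (U x) x" using assms(2) by (simp add: pos_def)
  have "inner (U x) (U x) \<le> d * inner (U x) x"
  proof (cases "inner (U x) (U x) = 0")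
    case True
    then show ?thesis
      using ux b by (metis assms(3) inner_zero_left mult_nonneg_nonneg zero_le_power2 zero_less_norm_iff
          zero_less_one_class.zero_le_one linorder_not_le order.trans inner_eq_zero_iff norm_zero
          mult_zero_right blinfun.zero_right order_refl)
  next
    case False
    then have p: "inner (U x) (U x) > 0" by (simp add: order_less_le)
    have "(inner (U x) (U x))^2 \<le> inner (U x) x * (d * inner (U x) (U x))"
      using cs b ux mult_left_mono order_trans by blast
    then have "inner (U x) (U x) * inner (U x) (U x) \<le> (d * inner (U x) x) * inner (U x) (U x)"
      by (simp add: power2_eq_square algebra_simps)
    then show ?thesis using p by simp
  qed
  then show "0 \<le> inner ((U o\<^sub>L (d *\<^sub>R id_blinfun - U)) x) x" using e by simp
qed


inductive Kc :: "real \<Rightarrow> real \<Rightarrow> real poly \<Rightarrow> bool" for m M :: real where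
  sq: "Kc m M (s * s)"
| lo: "Kc m M ([:-m,1:] * (s * s))"
| hi: "Kc m M ([:M,-1:] * (s * s))"
| bo: "Kc m M ([:-m,1:] * [:M,-1:] * (s * s))"
| add: "Kc m M p \<Longrightarrow> Kc m M q \<Longrightarrow> Kc m M (p + q)"

lemma pos_square: "self_adjoint S \<Longrightarrow> pos (S o\<^sub>L S)"
  unfolding pos_def self_adjoint_def
proof (intro allI)
  fix x assume "\<forall>x y. inner (S x) y = inner x (S y)"
  then have "inner (S (S x)) x = inner (S x) (S x)" by blast
  then show "0 \<le> inner ((S o\<^sub>L S) x) x" by simp
qed

lemma pos_add: "pos S \<Longrightarrow> pos T \<Longrightarrow> pos (S + T)"
  by (simp add: pos_def blinfun.add_left inner_add_left)

lemma poly_op_lo: "poly_op [:-m,1:] T = T - m *\<^sub>R id_blinfun"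
  by (simp add: poly_op_pCons)

lemma poly_op_hi: "poly_op [:M,-1:] T = M *\<^sub>R id_blinfun - T"
  by (rule blinfun_eqI) (simp add: poly_op_pCons blinfun.add_left blinfun.scaleR_left
      blinfun.diff_left blinfun.scaleR_right blinfun.minus_left blinfun.minus_right)

lemma gen_pos:
  assumes "self_adjoint T" "pos (poly_op L T)"
  shows "pos (poly_op (L * (s * s)) T)"
proof -
  have e: "L * (s * s) = s * L * s" by (simp add: ac_simps)
  show ?thesis unfolding e poly_op_mult
    using sandwich_pos[OF sa_poly_op[OF assms(1)] assms(2)] by simp
qed

lemma Kc_pos:
  assumes "Kc m M p" "self_adjoint T"
    and bnd: "\<And>x. m * (norm x)^2 \<le> inner (T x) x \<and> inner (T x) x \<le> M * (norm x)^2"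
  shows "pos (poly_op p T)"
  using assms(1)
proof induction
  case (sq s)
  then show ?case using pos_square[OF sa_poly_op[OF assms(2)]] by (simp add: poly_op_mult)
next
  case (lo s)
  have "pos (poly_op [:-m,1:] T)"
    using bnd by (simp add: pos_def poly_op_lo blinfun.diff_left blinfun.scaleR_left inner_diff_left
        power2_norm_eq_inner)
  then show ?case by (rule gen_pos[OF assms(2)])
next
  case (hi s)
  have "pos (poly_op [:M,-1:] T)"
    using bnd by (simp add: pos_def poly_op_hi blinfun.diff_left blinfun.scaleR_left inner_diff_left
        power2_norm_eq_inner)
  then show ?case by (rule gen_pos[OF assms(2)])
next
  case (bo s)
  define U where "U = T - m *\<^sub>R id_blinfun"
  have e: "poly_op ([:-m,1:] * [:M,-1:]) T = U o\<^sub>L ((M - m) *\<^sub>R id_blinfun - U)"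
  proof -
    have eq: "(M - m) *\<^sub>R id_blinfun - U = M *\<^sub>R id_blinfun - T"
      unfolding U_def by (rule blinfun_eqI) (simp add: blinfun.diff_left blinfun.scaleR_left scaleR_diff_left)
    show ?thesis by (simp only: poly_op_mult poly_op_lo poly_op_hi U_def[symmetric] eq)
  qed
  have saU: "self_adjoint U" unfolding U_def by (simp add: sa_diff sa_scale sa_id assms(2))
  have pU: "pos U"
    using bnd by (simp add: U_def pos_def blinfun.diff_left blinfun.scaleR_left inner_diff_left
        power2_norm_eq_inner)
  have bU: "inner (U x) x \<le> (M - m) * (norm x)^2" for x
    using bnd[of x] by (simp add: U_def blinfun.diff_left blinfun.scaleR_left inner_diff_left
        power2_norm_eq_inner algebra_simps)
  have "pos (poly_op ([:-m,1:] * [:M,-1:]) T)"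
    unfolding e by (rule UdU_pos[OF saU pU bU])
  then show ?case by (rule gen_pos[OF assms(2)])
next
  case (add p q)
  then show ?case by (simp add: poly_op_add pos_add)
qed

lemma Kc_lo: "Kc m M p \<Longrightarrow> Kc m M ([:-m,1:] * p)"
proof (induction rule: Kc.induct)
  case (sq s) then show ?case using Kc.lo[of m M s] by simp
next
  case (lo s) then show ?case using Kc.sq[of m M "[:-m,1:] * s"] by (simp only: ac_simps)
next
  case (hi s) then show ?case using Kc.bo[of m M s] by (simp only: ac_simps)
next
  case (bo s) then show ?case using Kc.hi[of m M "[:-m,1:] * s"] by (simp only: ac_simps)
next
  case (add p q) then show ?case using Kc.add by (simp add: distrib_left)
qed

lemma Kc_hi: "Kc m M p \<Longrightarrow> Kc m M ([:M,-1:] * p)"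
proof (induction rule: Kc.induct)
  case (sq s) then show ?case using Kc.hi[of m M s] by simp
next
  case (lo s) then show ?case using Kc.bo[of m M s] by (simp only: ac_simps)
next
  case (hi s) then show ?case using Kc.sq[of m M "[:M,-1:] * s"] by (simp only: ac_simps)
next
  case (bo s) then show ?case using Kc.lo[of m M "[:M,-1:] * s"] by (simp only: ac_simps)
next
  case (add p q) then show ?case using Kc.add by (simp add: distrib_left)
qed

lemma Kc_sq: "Kc m M p \<Longrightarrow> Kc m M (r * r * p)"
proof (induction rule: Kc.induct)
  case (sq s) then show ?case using Kc.sq[of m M "r * s"] by (simp only: ac_simps)
next
  case (lo s) then show ?case using Kc.lo[of m M "r * s"] by (simp only: ac_simps)
next
  case (hi s) then show ?case using Kc.hi[of m M "r * s"] by (simp only: ac_simps)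
next
  case (bo s) then show ?case using Kc.bo[of m M "r * s"] by (simp only: ac_simps)
next
  case (add p q) then show ?case using Kc.add by (simp add: distrib_left)
qed

lemma Kc_const: "c \<ge> 0 \<Longrightarrow> Kc m M [:c:]"
  using Kc.sq[of m M "[:sqrt c:]"] by simp


lemma poly_nonneg_right:
  fixes q :: "real poly"
  assumes "a < b" "\<And>t. a < t \<Longrightarrow> t \<le> b \<Longrightarrow> 0 \<le> poly q t"
  shows "0 \<le> poly q a"
proof (rule tendsto_lowerbound)
  show "(poly q \<longlongrightarrow> poly q a) (at_right a)"
    by (rule tendsto_mono[OF at_le]) (auto intro: isCont_tendsto_compose[OF poly_isCont, of "\<lambda>x. x"])
  show "\<forall>\<^sub>F x in at_right a. 0 \<le> poly q x"
    unfolding eventually_at_right_field using assms by (intro exI[of _ b]) auto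
qed simp

lemma poly_nonneg_left:
  fixes q :: "real poly"
  assumes "a < b" "\<And>t. a \<le> t \<Longrightarrow> t < b \<Longrightarrow> 0 \<le> poly q t"
  shows "0 \<le> poly q b"
proof (rule tendsto_lowerbound)
  show "(poly q \<longlongrightarrow> poly q b) (at_left b)"
    by (rule tendsto_mono[OF at_le]) (auto intro: isCont_tendsto_compose[OF poly_isCont, of "\<lambda>x. x"])
  show "\<forall>\<^sub>F x in at_left b. 0 \<le> poly q x"
    unfolding eventually_at_left_field using assms by (intro exI[of _ a]) auto
qed simp

lemma nonneg_Kc:
  fixes p :: "real poly"
  assumes "m < M" "\<And>t. m \<le> t \<Longrightarrow> t \<le> M \<Longrightarrow> 0 \<le> poly p t"
  shows "Kc m M p"
  using assms(2)
proof (induction "degree p" arbitrary: p rule: less_induct)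
  case less
  have cont: "continuous_on {m..M} (poly p)"
    using continuous_on_poly[OF continuous_on_id, of "{m..M}" p] by simp
  obtain r where r: "r \<in> {m..M}" and rmin: "\<And>t. t \<in> {m..M} \<Longrightarrow> poly p r \<le> poly p t"
    using continuous_attains_inf[OF _ _ cont] assms(1) by fastforce
  define c where "c = poly p r"
  have c0: "0 \<le> c" using less.prems r by (simp add: c_def)
  define q0 where "q0 = p - [:c:]"
  have pq: "p = q0 + [:c:]" by (simp add: q0_def)
  have q0r: "poly q0 r = 0" by (simp add: q0_def c_def)
  have q0nn: "\<And>t. m \<le> t \<Longrightarrow> t \<le> M \<Longrightarrow> 0 \<le> poly q0 t"
    using rmin by (simp add: q0_def c_def)
  have dq0: "degree q0 \<le> degree p" unfolding q0_def by (rule degree_diff_le) auto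
  show ?case
  proof (cases "q0 = 0")
    case True
    then show ?thesis using pq Kc_const[OF c0] by simp
  next
    case False
    obtain q1 where q1: "q0 = [:-r,1:] * q1"
      using q0r by (metis dvdE poly_eq_0_iff_dvd)
    have q1nz: "q1 \<noteq> 0" using False q1 by auto
    have dq1: "degree q1 < degree p"
      using dq0 degree_mult_eq[of "[:-r,1:]" q1] q1nz q1 by simp
    have q1val: "poly q1 t = poly q0 t / (t - r)" if "t \<noteq> r" for t
      using that by (simp add: q1 field_simps)
    have Kq0: "Kc m M q0"
    proof -
      consider "r = m" | "r = M" | "m < r" "r < M" using r by fastforce
      then show ?thesis
      proof cases
        case 1
        have "0 \<le> poly q1 t" if "m < t" "t \<le> M" for t
          using q0nn[of t] that 1 by (simp add: q1val)
        then have "0 \<le> poly q1 t" if "m \<le> t" "t \<le> M" for t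
          using poly_nonneg_right[OF assms(1)] that by (cases "t = m") auto
        then have "Kc m M q1" using less.hyps[OF dq1] by blast
        then show ?thesis using Kc_lo q1 1 by simp
      next
        case 2
        have "0 \<le> poly (-q1) t" if "m \<le> t" "t < M" for t
          using q0nn[of t] that 2 by (simp add: q1val divide_nonneg_neg)
        then have "0 \<le> poly (-q1) t" if "m \<le> t" "t \<le> M" for t
          using poly_nonneg_left[OF assms(1), of "-q1"] that by (cases "t = M") auto
        then have "Kc m M (-q1)" using less.hyps[of "-q1"] dq1 by simp
        moreover have "q0 = [:M,-1:] * (-q1)" using q1 2 by simp
        ultimately show ?thesis using Kc_hi[of m M "-q1"] by metis
      next
        case 3
        have a: "0 \<le> poly q1 r"
          using poly_nonneg_right[of r M q1] 3 q0nn by (simp add: q1val)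
        have b: "0 \<le> poly (-q1) r"
          using poly_nonneg_left[of m r "-q1"] 3 q0nn by (simp add: q1val divide_nonneg_neg)
        have "poly q1 r = 0" using a b by simp
        then obtain q2 where q2: "q1 = [:-r,1:] * q2"
          by (metis dvdE poly_eq_0_iff_dvd)
        have q2nz: "q2 \<noteq> 0" using q1nz q2 by auto
        have dq2: "degree q2 < degree p"
          using dq1 degree_mult_eq[of "[:-r,1:]" q2] q2nz q2 by simp
        have q2val: "poly q2 t = poly q0 t / (t - r)^2" if "t \<noteq> r" for t
        proof -
      have "poly q0 t = (t - r)^2 * poly q2 t" by (simp add: q1 q2 power2_eq_square algebra_simps)
      moreover have "(t - r)^2 \<noteq> 0" using that by simp
      ultimately show ?thesis by simp
    qed
        have "0 \<le> poly q2 t" if "m \<le> t" "t \<le> M" "t \<noteq> r" for t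
          using q0nn[of t] that by (simp add: q2val)
        then have "0 \<le> poly q2 t" if "m \<le> t" "t \<le> M" for t
          using poly_nonneg_right[of r M q2] that 3 by (cases "t = r") auto
        then have "Kc m M q2" using less.hyps[OF dq2] by blast
        then have "Kc m M ([:-r,1:] * [:-r,1:] * q2)" by (rule Kc_sq)
        moreover have "q0 = [:-r,1:] * [:-r,1:] * q2" using q1 q2 by (simp only: ac_simps)
        ultimately show ?thesis by simp
      qed
    qed
    show ?thesis using pq Kc.add[OF Kq0 Kc_const[OF c0]] by simp
  qed
qed

lemma inner_T_bound:
  fixes T :: "'a::real_inner \<Rightarrow>\<^sub>L 'a"
  shows "\<bar>inner (T x) x\<bar> \<le> norm T * (norm x)^2"
proof -
  have "\<bar>inner (T x) x\<bar> \<le> norm (T x) * norm x" by (rule Cauchy_Schwarz_ineq2)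
  also have "\<dots> \<le> norm T * norm x * norm x" by (simp add: mult_right_mono norm_blinfun)
  finally show ?thesis by (simp add: power2_eq_square mult.assoc)
qed

lemma num_range:
  fixes T :: "'a::real_inner \<Rightarrow>\<^sub>L 'a"
  assumes nt: "\<exists>x::'a. x \<noteq> 0"
  shows "num_lo T * (norm x)^2 \<le> inner (T x) x \<and> inner (T x) x \<le> num_hi T * (norm x)^2"
    and "num_lo T \<le> num_hi T"
proof -
  let ?S = "{inner (T x) x | x::'a. norm x = 1}"
  have b1: "\<bar>v\<bar> \<le> norm T" if vS: "v \<in> ?S" for v
  proof -
    obtain x where "v = inner (T x) x" "norm x = 1" using vS by blast
    then show ?thesis using inner_T_bound[of T x] by simp
  qed
  have bdd: "bdd_below ?S" "bdd_above ?S"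
    unfolding bdd_below_def bdd_above_def
    by (rule exI[of _ "- norm T"], use b1 in \<open>force simp: abs_le_iff\<close>)
       (rule exI[of _ "norm T"], use b1 in \<open>force simp: abs_le_iff\<close>)
  obtain y :: 'a where y: "y \<noteq> 0" using nt by blast
  have ne: "?S \<noteq> {}" using y by (auto intro!: exI[of _ "y /\<^sub>R norm y"])
  show "num_lo T \<le> num_hi T"
    unfolding num_lo_def num_hi_def using ne bdd by (meson cInf_le_cSup)
  show "num_lo T * (norm x)^2 \<le> inner (T x) x \<and> inner (T x) x \<le> num_hi T * (norm x)^2"
  proof (cases "x = 0")
    case True then show ?thesis by simp
  next
    case False
    define u where "u = x /\<^sub>R norm x"
    have nu: "norm u = 1" using False by (simp add: u_def)
    have iu: "inner (T u) u = inner (T x) x / (norm x)^2"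
      using False by (simp add: u_def blinfun.scaleR_right power2_eq_square field_simps)
    have mem: "inner (T u) u \<in> ?S" using nu by blast
    have "num_lo T \<le> inner (T x) x / (norm x)^2"
      unfolding num_lo_def using cInf_lower[OF mem bdd(1)] iu by simp
    moreover have "inner (T x) x / (norm x)^2 \<le> num_hi T"
      unfolding num_hi_def using cSup_upper[OF mem bdd(2)] iu by simp
    moreover have "(norm x)^2 > 0" using False by simp
    ultimately show ?thesis by (simp add: field_simps)
  qed
qed

lemma sa_zero_form:
  assumes "self_adjoint S" "\<And>x. inner (S x) x = 0"
  shows "S = 0"
proof (rule blinfun_eqI)
  fix x
  have sym: "inner (S y) x = inner (S x) y" for y
    using assms(1) by (simp add: self_adjoint_def inner_commute)
  have "inner (S (x + S x)) (x + S x) = 0" by (rule assms(2))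
  then have "inner (S x) (S x) = 0"
    using assms(2)[of x] assms(2)[of "S x"] sym[of "S x"]
    by (simp add: blinfun.add_right inner_add_left inner_add_right)
  then show "blinfun_apply S x = blinfun_apply 0 x" by simp
qed

lemma poly_pos:
  fixes T :: "'a::real_inner \<Rightarrow>\<^sub>L 'a"
  assumes nt: "\<exists>x::'a. x \<noteq> 0" and sa: "self_adjoint T"
    and nn: "\<And>t. num_lo T \<le> t \<Longrightarrow> t \<le> num_hi T \<Longrightarrow> 0 \<le> poly p t"
  shows "pos (poly_op p T)"
proof (cases "num_lo T < num_hi T")
  case True
  show ?thesis
    by (rule Kc_pos[OF nonneg_Kc[OF True nn] sa num_range(1)[OF nt]])
next
  case False
  define m where "m = num_lo T"
  have mM: "num_hi T = m" using False num_range(2)[OF nt, of T] by (simp add: m_def)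
  have "T - m *\<^sub>R id_blinfun = 0"
  proof (rule sa_zero_form)
    show "self_adjoint (T - m *\<^sub>R id_blinfun)" by (simp add: sa_diff sa_scale sa_id sa)
    fix x
    show "inner ((T - m *\<^sub>R id_blinfun) x) x = 0"
      using num_range(1)[OF nt, of T x] mM
      by (simp add: m_def blinfun.diff_left blinfun.scaleR_left inner_diff_left power2_norm_eq_inner)
  qed
  then have Tm: "T = m *\<^sub>R id_blinfun" by simp
  have "poly (p - [:poly p m:]) m = 0" by simp
  then obtain q where q: "p - [:poly p m:] = [:-m,1:] * q"
    by (metis dvdE poly_eq_0_iff_dvd)
  have pe: "p = [:poly p m:] + [:-m,1:] * q" using q by (simp add: algebra_simps)
  have "poly_op p T = poly_op ([:poly p m:] + [:-m,1:] * q) T" using pe by simp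
  also have "\<dots> = poly p m *\<^sub>R id_blinfun + (poly_op [:-m,1:] T o\<^sub>L poly_op q T)"
    by (simp only: poly_op_add poly_op_const poly_op_mult)
  also have "poly_op [:-m,1:] T = 0" unfolding poly_op_lo Tm by simp
  finally have "poly_op p T = poly p m *\<^sub>R id_blinfun"
    by (simp add: bounded_bilinear.zero_left[OF bounded_bilinear_blinfun_compose])
  moreover have "0 \<le> poly p m" using nn[of m] mM by (simp add: m_def)
  ultimately show ?thesis by (simp add: pos_def blinfun.scaleR_left)
qed

lemma poly_norm_bound:
  fixes T :: "'a::real_inner \<Rightarrow>\<^sub>L 'a"
  assumes nt: "\<exists>x::'a. x \<noteq> 0" and sa: "self_adjoint T"
    and b: "\<And>t. num_lo T \<le> t \<Longrightarrow> t \<le> num_hi T \<Longrightarrow> \<bar>poly p t\<bar> \<le> s"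
  shows "norm (poly_op p T) \<le> s"
proof -
  have s0: "0 \<le> s" using b[of "num_lo T"] num_range(2)[OF nt, of T] by simp
  let ?P = "poly_op p T"
  have "pos (poly_op ([: s * s :] - p * p) T)"
  proof (rule poly_pos[OF nt sa])
    fix t assume "num_lo T \<le> t" "t \<le> num_hi T"
    then have "\<bar>poly p t\<bar> \<le> s" by (rule b)
    then have "\<bar>poly p t\<bar> * \<bar>poly p t\<bar> \<le> s * s"
      using s0 by (intro mult_mono) simp_all
    then have "poly p t * poly p t \<le> s * s" by (simp add: abs_mult_self_eq)
    then show "0 \<le> poly ([: s * s :] - p * p) t" by simp
  qed
  moreover have "poly_op ([: s * s :] - p * p) T = (s * s) *\<^sub>R id_blinfun - (?P o\<^sub>L ?P)"
    by (simp only: poly_op_diff poly_op_mult poly_op_const)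
  ultimately have h0: "pos ((s * s) *\<^sub>R id_blinfun - (?P o\<^sub>L ?P))" by simp
  have h: "0 \<le> inner ((s * s) *\<^sub>R x - blinfun_apply ?P (blinfun_apply ?P x)) x" for x
  proof -
    have "0 \<le> inner (((s * s) *\<^sub>R id_blinfun - (?P o\<^sub>L ?P)) x) x"
      using h0 unfolding pos_def by blast
    also have "((s * s) *\<^sub>R id_blinfun - (?P o\<^sub>L ?P)) x = (s * s) *\<^sub>R x - blinfun_apply ?P (blinfun_apply ?P x)"
      by (simp only: blinfun.diff_left blinfun.scaleR_left blinfun_apply_id_blinfun blinfun_apply_blinfun_compose)
    finally show ?thesis .
  qed
  have saP: "self_adjoint ?P" by (rule sa_poly_op[OF sa])
  show ?thesis
  proof (rule norm_blinfun_bound[OF s0])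
    fix x
    have "inner (blinfun_apply ?P (blinfun_apply ?P x)) x = inner (blinfun_apply ?P x) (blinfun_apply ?P x)"
      using saP unfolding self_adjoint_def by blast
    then have "inner (blinfun_apply ?P x) (blinfun_apply ?P x) \<le> (s * s) * inner x x"
      using h[of x] by (simp add: inner_diff_left)
    then have "(norm (blinfun_apply ?P x))^2 \<le> (s * norm x)^2"
      by (simp add: power2_norm_eq_inner power_mult_distrib power2_eq_square[of s])
    then show "norm (blinfun_apply ?P x) \<le> s * norm x"
      using power2_le_imp_le[OF _ mult_nonneg_nonneg[OF s0 norm_ge_zero]] by blast
  qed
qed

lemma rpf_poly:
  fixes g :: "real \<Rightarrow> real"
  assumes "real_polynomial_function g"
  shows "\<exists>p. g = poly p"
  using assms
proof induction
  case (linear f)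
  have "f x = poly [:0, f 1:] x" for x
    using linear.hyps[THEN bounded_linear.linear, THEN linear_scale, of x 1] by (simp add: mult.commute)
  then show ?case by blast
next
  case (const c) then show ?case by (intro exI[of _ "[:c:]"]) auto
next
  case (add f g)
  then obtain p q where "f = poly p" "g = poly q" by blast
  then show ?case by (intro exI[of _ "p + q"]) auto
next
  case (mult f g)
  then obtain p q where "f = poly p" "g = poly q" by blast
  then show ?case by (intro exI[of _ "p * q"]) auto
qed

lemma poly_approx:
  fixes f :: "real \<Rightarrow> real"
  assumes "continuous_on {a..b} f" "e > 0"
  shows "\<exists>p. \<forall>t\<in>{a..b}. \<bar>poly p t - f t\<bar> < e"
proof -
  obtain g where g: "real_polynomial_function g" "\<And>x. x \<in> {a..b} \<Longrightarrow> \<bar>f x - g x\<bar> < e"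
    using Stone_Weierstrass_real_polynomial_function[OF compact_Icc assms] by blast
  obtain p where "g = poly p" using rpf_poly[OF g(1)] by blast
  then show ?thesis using g(2) by (intro exI[of _ p]) (auto simp: abs_minus_commute)
qed


definition fprop :: "(real \<Rightarrow> real) \<Rightarrow> ('a::real_inner \<Rightarrow>\<^sub>L 'a) \<Rightarrow> ('a \<Rightarrow>\<^sub>L 'a) \<Rightarrow> bool" where
  "fprop f T X \<longleftrightarrow> (\<forall>e>0. \<exists>d>0. \<forall>p.
      (\<forall>t\<in>{num_lo T..num_hi T}. \<bar>poly p t - f t\<bar> < d) \<longrightarrow> norm (poly_op p T - X) < e)"

lemma fcalc_eq_THE: "fcalc f T = (THE X. fprop f T X)"
  unfolding fcalc_def fprop_def ..

lemma poly_op_diff_bound: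
  fixes T :: "'a::real_inner \<Rightarrow>\<^sub>L 'a"
  assumes nt: "\<exists>x::'a. x \<noteq> 0" and sa: "self_adjoint T"
    and "\<forall>t\<in>{num_lo T..num_hi T}. \<bar>poly p t - f t\<bar> < d1"
    and "\<forall>t\<in>{num_lo T..num_hi T}. \<bar>poly q t - f t\<bar> < d2"
  shows "norm (poly_op p T - poly_op q T) \<le> d1 + d2"
proof -
  have "norm (poly_op (p - q) T) \<le> d1 + d2"
  proof (rule poly_norm_bound[OF nt sa])
    fix t assume "num_lo T \<le> t" "t \<le> num_hi T"
    then show "\<bar>poly (p - q) t\<bar> \<le> d1 + d2" using assms(3,4) by force
  qed
  then show ?thesis by (simp add: poly_op_diff)
qed

lemma blinfun_Cauchy_conv:
  fixes X::"nat \<Rightarrow> 'a::real_normed_vector \<Rightarrow>\<^sub>L 'b::{real_normed_vector,complete_space}"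
  assumes "Cauchy X"
  shows "convergent X"
proof -
  {
    fix x::'a
    {
      fix x::'a
      assume "norm x \<le> 1"
      have "Cauchy (\<lambda>n. X n x)"
      proof (rule CauchyI)
        fix e::real
        assume "0 < e"
        from CauchyD[OF \<open>Cauchy X\<close> \<open>0 < e\<close>] obtain M
          where M: "\<And>m n. m \<ge> M \<Longrightarrow> n \<ge> M \<Longrightarrow> norm (X m - X n) < e"
          by auto
        show "\<exists>M. \<forall>m\<ge>M. \<forall>n\<ge>M. norm (X m x - X n x) < e"
        proof (safe intro!: exI[where x=M])
          fix m n
          assume le: "M \<le> m" "M \<le> n"
          have "norm (X m x - X n x) = norm ((X m - X n) x)"
            by (simp add: blinfun.bilinear_simps)
          also have "\<dots> \<le> norm (X m - X n) * norm x"
             by (rule norm_blinfun)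
          also have "\<dots> \<le> norm (X m - X n) * 1"
            using \<open>norm x \<le> 1\<close> norm_ge_zero by (rule mult_left_mono)
          also have "\<dots> = norm (X m - X n)" by simp
          also have "\<dots> < e" using le by fact
          finally show "norm (X m x - X n x) < e" .
        qed
      qed
      hence "convergent (\<lambda>n. X n x)"
        by (metis Cauchy_convergent_iff)
    } note convergent_norm1 = this
    define y where "y = x /\<^sub>R norm x"
    have y: "norm y \<le> 1" and xy: "x = norm x *\<^sub>R y"
      by (simp_all add: y_def inverse_eq_divide)
    have "convergent (\<lambda>n. norm x *\<^sub>R X n y)"
      by (intro bounded_bilinear.convergent[OF bounded_bilinear_scaleR] convergent_const
        convergent_norm1 y)
    also have "(\<lambda>n. norm x *\<^sub>R X n y) = (\<lambda>n. X n x)"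
      by (subst xy) (simp add: blinfun.bilinear_simps)
    finally have "convergent (\<lambda>n. X n x)" .
  }
  then obtain v where v: "\<And>x. (\<lambda>n. X n x) \<longlonglongrightarrow> v x"
    unfolding convergent_def
    by metis

  have "Cauchy (\<lambda>n. norm (X n))"
  proof (rule CauchyI)
    fix e::real
    assume "e > 0"
    from CauchyD[OF \<open>Cauchy X\<close> \<open>0 < e\<close>] obtain M
      where M: "\<And>m n. m \<ge> M \<Longrightarrow> n \<ge> M \<Longrightarrow> norm (X m - X n) < e"
      by auto
    show "\<exists>M. \<forall>m\<ge>M. \<forall>n\<ge>M. norm (norm (X m) - norm (X n)) < e"
    proof (safe intro!: exI[where x=M])
      fix m n assume mn: "m \<ge> M" "n \<ge> M"
      have "norm (norm (X m) - norm (X n)) \<le> norm (X m - X n)"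
        by (metis norm_triangle_ineq3 real_norm_def)
      also have "\<dots> < e" using mn by fact
      finally show "norm (norm (X m) - norm (X n)) < e" .
    qed
  qed
  then obtain K where K: "(\<lambda>n. norm (X n)) \<longlonglongrightarrow> K"
    unfolding Cauchy_convergent_iff convergent_def
    by metis

  have "bounded_linear v"
  proof
    fix x y and r::real
    from tendsto_add[OF v[of x] v [of y]] v[of "x + y", unfolded blinfun.bilinear_simps]
      tendsto_scaleR[OF tendsto_const[of r] v[of x]] v[of "r *\<^sub>R x", unfolded blinfun.bilinear_simps]
    show "v (x + y) = v x + v y" "v (r *\<^sub>R x) = r *\<^sub>R v x"
      by (metis (poly_guards_query) LIMSEQ_unique)+
    show "\<exists>K. \<forall>x. norm (v x) \<le> norm x * K"
    proof (safe intro!: exI[where x=K])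
      fix x
      have "norm (v x) \<le> K * norm x"
        by (rule tendsto_le[OF _ tendsto_mult[OF K tendsto_const] tendsto_norm[OF v]])
          (auto simp: norm_blinfun)
      thus "norm (v x) \<le> norm x * K"
        by (simp add: ac_simps)
    qed
  qed
  hence Bv: "\<And>x. (\<lambda>n. X n x) \<longlonglongrightarrow> Blinfun v x"
    by (auto simp: bounded_linear_Blinfun_apply v)

  have "X \<longlonglongrightarrow> Blinfun v"
  proof (rule LIMSEQ_I)
    fix r::real assume "r > 0"
    define r' where "r' = r / 2"
    have "0 < r'" "r' < r" using \<open>r > 0\<close> by (simp_all add: r'_def)
    from CauchyD[OF \<open>Cauchy X\<close> \<open>r' > 0\<close>]
    obtain M where M: "\<And>m n. m \<ge> M \<Longrightarrow> n \<ge> M \<Longrightarrow> norm (X m - X n) < r'"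
      by metis
    show "\<exists>no. \<forall>n\<ge>no. norm (X n - Blinfun v) < r"
    proof (safe intro!: exI[where x=M])
      fix n assume n: "M \<le> n"
      have "norm (X n - Blinfun v) \<le> r'"
      proof (rule norm_blinfun_bound)
        fix x
        have "eventually (\<lambda>m. m \<ge> M) sequentially"
          by (metis eventually_ge_at_top)
        hence ev_le: "eventually (\<lambda>m. norm (X n x - X m x) \<le> r' * norm x) sequentially"
        proof eventually_elim
          case (elim m)
          have "norm (X n x - X m x) = norm ((X n - X m) x)"
            by (simp add: blinfun.bilinear_simps)
          also have "\<dots> \<le> norm ((X n - X m)) * norm x"
            by (rule norm_blinfun)
          also have "\<dots> \<le> r' * norm x"
            using M[OF n elim] by (simp add: mult_right_mono)
          finally show ?case .
        qed
        have tendsto_v: "(\<lambda>m. norm (X n x - X m x)) \<longlonglongrightarrow> norm (X n x - Blinfun v x)"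
          by (auto intro!: tendsto_intros Bv)
        show "norm ((X n - Blinfun v) x) \<le> r' * norm x"
          by (auto intro!: tendsto_upperbound tendsto_v ev_le simp: blinfun.bilinear_simps)
      qed (simp add: \<open>0 < r'\<close> less_imp_le)
      thus "norm (X n - Blinfun v) < r"
        by (metis \<open>r' < r\<close> le_less_trans)
    qed
  qed
  thus ?thesis
    by (rule convergentI)
qed

lemma fprop_exists:
  fixes T :: "'a::{real_inner,complete_space} \<Rightarrow>\<^sub>L 'a"
  assumes nt: "\<exists>x::'a. x \<noteq> 0" and sa: "self_adjoint T"
    and cont: "continuous_on {num_lo T..num_hi T} f"
  shows "\<exists>X. fprop f T X"
proof -
  let ?I = "{num_lo T..num_hi T}"
  define P where "P k = (SOME p. \<forall>t\<in>?I. \<bar>poly p t - f t\<bar> < inverse (real (Suc k)))" for k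
  have P: "\<forall>t\<in>?I. \<bar>poly (P k) t - f t\<bar> < inverse (real (Suc k))" for k
    unfolding P_def by (rule someI_ex) (rule poly_approx[OF cont], simp)
  define Y where "Y k = poly_op (P k) T" for k
  have bd: "norm (Y j - Y k) \<le> inverse (real (Suc j)) + inverse (real (Suc k))" for j k
    unfolding Y_def by (rule poly_op_diff_bound[OF nt sa P P])
  have "Cauchy Y"
  proof (rule CauchyI)
    fix e :: real assume e: "0 < e"
    have e2: "e / 2 > 0" using e by simp
    from reals_Archimedean[OF e2] obtain N where N: "inverse (real (Suc N)) < e / 2" by blast
    have "norm (Y m - Y n) < e" if "m \<ge> N" "n \<ge> N" for m n
    proof -
      have "inverse (real (Suc m)) \<le> inverse (real (Suc N))"
        using that by (simp add: le_imp_inverse_le)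
      moreover have "inverse (real (Suc n)) \<le> inverse (real (Suc N))"
        using that by (simp add: le_imp_inverse_le)
      ultimately show ?thesis using bd[of m n] N by linarith
    qed
    then show "\<exists>M. \<forall>m\<ge>M. \<forall>n\<ge>M. norm (Y m - Y n) < e" by blast
  qed
  from blinfun_Cauchy_conv[OF this] obtain X where X: "Y \<longlonglongrightarrow> X"
    unfolding convergent_def by blast
  have "fprop f T X"
    unfolding fprop_def
  proof (intro allI impI)
    fix e :: real assume e: "0 < e"
    show "\<exists>d>0. \<forall>p. (\<forall>t\<in>?I. \<bar>poly p t - f t\<bar> < d) \<longrightarrow> norm (poly_op p T - X) < e"
    proof (intro exI[of _ "e/2"] conjI allI impI)
      show "0 < e/2" using e by simp
      fix p assume p: "\<forall>t\<in>?I. \<bar>poly p t - f t\<bar> < e/2"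
      have lim1: "(\<lambda>k. norm (poly_op p T - Y k)) \<longlonglongrightarrow> norm (poly_op p T - X)"
        using X by (intro tendsto_norm tendsto_diff tendsto_const)
      have lim2: "(\<lambda>k. e/2 + inverse (real (Suc k))) \<longlonglongrightarrow> e/2 + 0"
        by (intro tendsto_intros LIMSEQ_inverse_real_of_nat)
      have "norm (poly_op p T - X) \<le> e/2 + 0"
        by (rule LIMSEQ_le[OF lim1 lim2]) (use poly_op_diff_bound[OF nt sa p P] in \<open>auto simp: Y_def\<close>)
      then show "norm (poly_op p T - X) < e" using e by simp
    qed
  qed
  then show ?thesis by blast
qed

lemma fprop_unique:
  fixes T :: "'a::real_inner \<Rightarrow>\<^sub>L 'a"
  assumes cont: "continuous_on {num_lo T..num_hi T} f"
    and X: "fprop f T X" and Y: "fprop f T Y"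
  shows "X = Y"
proof (rule ccontr)
  assume "X \<noteq> Y"
  then have e: "norm (X - Y) / 2 > 0" by simp
  obtain d1 where d1: "d1 > 0" "\<And>p. (\<forall>t\<in>{num_lo T..num_hi T}. \<bar>poly p t - f t\<bar> < d1) \<Longrightarrow> norm (poly_op p T - X) < norm (X - Y) / 2"
    using X e unfolding fprop_def by blast
  obtain d2 where d2: "d2 > 0" "\<And>p. (\<forall>t\<in>{num_lo T..num_hi T}. \<bar>poly p t - f t\<bar> < d2) \<Longrightarrow> norm (poly_op p T - Y) < norm (X - Y) / 2"
    using Y e unfolding fprop_def by blast
  obtain p where p: "\<forall>t\<in>{num_lo T..num_hi T}. \<bar>poly p t - f t\<bar> < min d1 d2"
    using poly_approx[OF cont, of "min d1 d2"] d1 d2 by auto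
  have a: "norm (poly_op p T - X) < norm (X - Y) / 2" using d1(2) p by force
  have b: "norm (poly_op p T - Y) < norm (X - Y) / 2" using d2(2) p by force
  have "X - Y = (poly_op p T - Y) - (poly_op p T - X)" by simp
  then have "norm (X - Y) \<le> norm (poly_op p T - Y) + norm (poly_op p T - X)"
    by (metis norm_triangle_ineq4)
  with a b show False by simp
qed

lemma fcalc_fprop:
  fixes T :: "'a::{real_inner,complete_space} \<Rightarrow>\<^sub>L 'a"
  assumes nt: "\<exists>x::'a. x \<noteq> 0" and sa: "self_adjoint T"
    and cont: "continuous_on {num_lo T..num_hi T} f"
  shows "fprop f T (fcalc f T)"
proof -
  obtain X where X: "fprop f T X" using fprop_exists[OF assms] by blast
  have "fcalc f T = X" unfolding fcalc_eq_THE
    by (rule the_equality[where P="fprop f T", OF X]) (rule fprop_unique[OF cont _ X])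
  then show ?thesis using X by simp
qed

lemma fcalc_tendsto:
  fixes T :: "'a::{real_inner,complete_space} \<Rightarrow>\<^sub>L 'a"
  assumes nt: "\<exists>x::'a. x \<noteq> 0" and sa: "self_adjoint T"
    and cont: "continuous_on {num_lo T..num_hi T} f"
    and q: "\<And>k t. t \<in> {num_lo T..num_hi T} \<Longrightarrow> \<bar>poly (q k) t - f t\<bar> < \<delta> k"
    and \<delta>: "\<delta> \<longlonglongrightarrow> 0"
  shows "(\<lambda>k. poly_op (q k) T) \<longlonglongrightarrow> fcalc f T"
proof (rule LIMSEQ_I)
  fix e :: real assume e: "0 < e"
  obtain d where d: "d > 0" "\<And>p. (\<forall>t\<in>{num_lo T..num_hi T}. \<bar>poly p t - f t\<bar> < d) \<Longrightarrow> norm (poly_op p T - fcalc f T) < e"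
    using fcalc_fprop[OF nt sa cont] e unfolding fprop_def by blast
  obtain N where N: "\<And>k. k \<ge> N \<Longrightarrow> norm (\<delta> k - 0) < d"
    using LIMSEQ_D[OF \<delta> d(1)] by blast
  have "norm (poly_op (q k) T - fcalc f T) < e" if "k \<ge> N" for k
  proof (rule d(2), intro ballI)
    fix t assume "t \<in> {num_lo T..num_hi T}"
    then have "\<bar>poly (q k) t - f t\<bar> < \<delta> k" by (rule q)
    moreover have "\<delta> k < d" using N[OF that] by simp
    ultimately show "\<bar>poly (q k) t - f t\<bar> < d" by simp
  qed
  then show "\<exists>no. \<forall>k\<ge>no. norm (poly_op (q k) T - fcalc f T) < e" by blast
qed

lemma approx_seq:
  assumes cont: "continuous_on {a..b} f"
  shows "\<exists>P. \<forall>k. \<forall>t\<in>{a..b}. \<bar>poly (P k) t - f t\<bar> < inverse (real (Suc k))"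
proof -
  have "\<forall>k. \<exists>p. \<forall>t\<in>{a..b}. \<bar>poly p t - f t\<bar> < inverse (real (Suc k))"
    using poly_approx[OF cont] by simp
  then show ?thesis by (rule choice)
qed

lemma cont_poly: "continuous_on S (poly (p :: real poly))"
  using continuous_on_poly[OF continuous_on_id, of S p] by simp

lemma fcalc_poly:
  fixes T :: "'a::{real_inner,complete_space} \<Rightarrow>\<^sub>L 'a"
  assumes nt: "\<exists>x::'a. x \<noteq> 0" and sa: "self_adjoint T"
  shows "fcalc (poly p) T = poly_op p T"
proof -
  have "(\<lambda>k. poly_op p T) \<longlonglongrightarrow> fcalc (poly p) T"
    by (rule fcalc_tendsto[OF nt sa cont_poly _ LIMSEQ_inverse_real_of_nat]) simp
  then show ?thesis using LIMSEQ_unique tendsto_const by blast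
qed

lemma fcalc_cong:
  assumes "\<And>t. t \<in> {num_lo T..num_hi T} \<Longrightarrow> f t = g t"
  shows "fcalc f T = fcalc g T"
proof -
  have "\<And>p d. (\<forall>t\<in>{num_lo T..num_hi T}. \<bar>poly p t - f t\<bar> < d) = (\<forall>t\<in>{num_lo T..num_hi T}. \<bar>poly p t - g t\<bar> < d)"
    using assms by auto
  then show ?thesis unfolding fcalc_def by (simp only:)
qed

lemma fcalc_diff:
  fixes T :: "'a::{real_inner,complete_space} \<Rightarrow>\<^sub>L 'a"
  assumes nt: "\<exists>x::'a. x \<noteq> 0" and sa: "self_adjoint T"
    and cf: "continuous_on {num_lo T..num_hi T} f" and cg: "continuous_on {num_lo T..num_hi T} g"
  shows "fcalc (\<lambda>t. f t - g t) T = fcalc f T - fcalc g T"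
proof -
  obtain P where P: "\<And>k t. t\<in>{num_lo T..num_hi T} \<Longrightarrow> \<bar>poly (P k) t - f t\<bar> < inverse (real (Suc k))"
    using approx_seq[OF cf] by blast
  obtain Q where Q: "\<And>k t. t\<in>{num_lo T..num_hi T} \<Longrightarrow> \<bar>poly (Q k) t - g t\<bar> < inverse (real (Suc k))"
    using approx_seq[OF cg] by blast
  have l1: "(\<lambda>k. poly_op (P k) T) \<longlonglongrightarrow> fcalc f T"
    by (rule fcalc_tendsto[OF nt sa cf P LIMSEQ_inverse_real_of_nat])
  have l2: "(\<lambda>k. poly_op (Q k) T) \<longlonglongrightarrow> fcalc g T"
    by (rule fcalc_tendsto[OF nt sa cg Q LIMSEQ_inverse_real_of_nat])
  have "(\<lambda>k. poly_op (P k - Q k) T) \<longlonglongrightarrow> fcalc f T - fcalc g T"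
    unfolding poly_op_diff by (rule tendsto_diff[OF l1 l2])
  moreover have "(\<lambda>k. poly_op (P k - Q k) T) \<longlonglongrightarrow> fcalc (\<lambda>t. f t - g t) T"
  proof (rule fcalc_tendsto[OF nt sa continuous_on_diff[OF cf cg]])
    show "(\<lambda>k. 2 * inverse (real (Suc k))) \<longlonglongrightarrow> 0"
      using tendsto_mult_right_zero[OF LIMSEQ_inverse_real_of_nat, of 2] by simp
    fix k t assume t: "t \<in> {num_lo T..num_hi T}"
    show "\<bar>poly (P k - Q k) t - (f t - g t)\<bar> < 2 * inverse (real (Suc k))"
      using P[OF t, of k] Q[OF t, of k] by (simp add: abs_if split: if_splits) linarith?
  qed
  ultimately show ?thesis using LIMSEQ_unique by blast
qed

lemma fcalc_scale:
  fixes T :: "'a::{real_inner,complete_space} \<Rightarrow>\<^sub>L 'a"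
  assumes nt: "\<exists>x::'a. x \<noteq> 0" and sa: "self_adjoint T"
    and cf: "continuous_on {num_lo T..num_hi T} f"
  shows "fcalc (\<lambda>t. c * f t) T = c *\<^sub>R fcalc f T"
proof -
  obtain P where P: "\<And>k t. t\<in>{num_lo T..num_hi T} \<Longrightarrow> \<bar>poly (P k) t - f t\<bar> < inverse (real (Suc k))"
    using approx_seq[OF cf] by blast
  have l1: "(\<lambda>k. poly_op (P k) T) \<longlonglongrightarrow> fcalc f T"
    by (rule fcalc_tendsto[OF nt sa cf P LIMSEQ_inverse_real_of_nat])
  have "(\<lambda>k. poly_op (smult c (P k)) T) \<longlonglongrightarrow> c *\<^sub>R fcalc f T"
    unfolding poly_op_smult by (rule tendsto_scaleR[OF tendsto_const l1])
  moreover have "(\<lambda>k. poly_op (smult c (P k)) T) \<longlonglongrightarrow> fcalc (\<lambda>t. c * f t) T"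
  proof (rule fcalc_tendsto[OF nt sa continuous_on_mult[OF continuous_on_const cf]])
    show "(\<lambda>k. (\<bar>c\<bar> + 1) * inverse (real (Suc k))) \<longlonglongrightarrow> 0"
      using tendsto_mult_right_zero[OF LIMSEQ_inverse_real_of_nat] by simp
    fix k t assume t: "t \<in> {num_lo T..num_hi T}"
    have "\<bar>poly (smult c (P k)) t - c * f t\<bar> = \<bar>c\<bar> * \<bar>poly (P k) t - f t\<bar>"
      by (simp add: abs_mult[symmetric] algebra_simps)
    also have "\<dots> \<le> (\<bar>c\<bar> + 1) * \<bar>poly (P k) t - f t\<bar>" by (simp add: mult_right_mono)
    also have "\<dots> < (\<bar>c\<bar> + 1) * inverse (real (Suc k))"
      using P[OF t, of k] by (intro mult_strict_left_mono) auto
    finally show "\<bar>poly (smult c (P k)) t - c * f t\<bar> < (\<bar>c\<bar> + 1) * inverse (real (Suc k))" .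
  qed
  ultimately show ?thesis using LIMSEQ_unique by blast
qed


lemma cont_bound:
  fixes f :: "real \<Rightarrow> real"
  assumes "continuous_on {a..b} f"
  obtains B where "B \<ge> 0" "\<And>t. t \<in> {a..b} \<Longrightarrow> \<bar>f t\<bar> \<le> B"
proof -
  have "bounded (f ` {a..b})"
    by (rule compact_imp_bounded[OF compact_continuous_image[OF assms compact_Icc]])
  then obtain B where B: "\<And>t. t \<in> {a..b} \<Longrightarrow> norm (f t) \<le> B"
    unfolding bounded_iff by blast
  show ?thesis
    by (rule that[of "max B 0"]) (use B in \<open>force\<close>)+
qed

lemma fcalc_mult:
  fixes T :: "'a::{real_inner,complete_space} \<Rightarrow>\<^sub>L 'a"
  assumes nt: "\<exists>x::'a. x \<noteq> 0" and sa: "self_adjoint T"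
    and cf: "continuous_on {num_lo T..num_hi T} f" and cg: "continuous_on {num_lo T..num_hi T} g"
  shows "fcalc (\<lambda>t. f t * g t) T = fcalc f T o\<^sub>L fcalc g T"
proof -
  obtain P where P: "\<And>k t. t\<in>{num_lo T..num_hi T} \<Longrightarrow> \<bar>poly (P k) t - f t\<bar> < inverse (real (Suc k))"
    using approx_seq[OF cf] by blast
  obtain Q where Q: "\<And>k t. t\<in>{num_lo T..num_hi T} \<Longrightarrow> \<bar>poly (Q k) t - g t\<bar> < inverse (real (Suc k))"
    using approx_seq[OF cg] by blast
  obtain Bf where Bf: "Bf \<ge> 0" "\<And>t. t \<in> {num_lo T..num_hi T} \<Longrightarrow> \<bar>f t\<bar> \<le> Bf"
    using cont_bound[OF cf] by blast
  obtain Bg where Bg: "Bg \<ge> 0" "\<And>t. t \<in> {num_lo T..num_hi T} \<Longrightarrow> \<bar>g t\<bar> \<le> Bg"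
    using cont_bound[OF cg] by blast
  have l1: "(\<lambda>k. poly_op (P k) T) \<longlonglongrightarrow> fcalc f T"
    by (rule fcalc_tendsto[OF nt sa cf P LIMSEQ_inverse_real_of_nat])
  have l2: "(\<lambda>k. poly_op (Q k) T) \<longlonglongrightarrow> fcalc g T"
    by (rule fcalc_tendsto[OF nt sa cg Q LIMSEQ_inverse_real_of_nat])
  have "(\<lambda>k. poly_op (P k * Q k) T) \<longlonglongrightarrow> (fcalc f T o\<^sub>L fcalc g T)"
    unfolding poly_op_mult by (rule bounded_bilinear.tendsto[OF bounded_bilinear_blinfun_compose l1 l2])
  moreover have "(\<lambda>k. poly_op (P k * Q k) T) \<longlonglongrightarrow> fcalc (\<lambda>t. f t * g t) T"
  proof (rule fcalc_tendsto[OF nt sa continuous_on_mult[OF cf cg]])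
    show "(\<lambda>k. (Bf + 1 + Bg) * inverse (real (Suc k))) \<longlonglongrightarrow> 0"
      using tendsto_mult_right_zero[OF LIMSEQ_inverse_real_of_nat] by simp
    fix k t assume t: "t \<in> {num_lo T..num_hi T}"
    define \<delta> where "\<delta> = inverse (real (Suc k))"
    have d1: "\<delta> \<le> 1" unfolding \<delta>_def by (simp add: inverse_le_1_iff)
    have ep: "\<bar>poly (P k) t - f t\<bar> < \<delta>" using P[OF t] by (simp add: \<delta>_def)
    have eq: "\<bar>poly (Q k) t - g t\<bar> < \<delta>" using Q[OF t] by (simp add: \<delta>_def)
    have bp: "\<bar>poly (P k) t\<bar> \<le> Bf + 1" using ep d1 Bf(2)[OF t] by linarith
    have "poly (P k * Q k) t - f t * g t
        = poly (P k) t * (poly (Q k) t - g t) + g t * (poly (P k) t - f t)"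
      by (simp add: algebra_simps)
    then have "\<bar>poly (P k * Q k) t - f t * g t\<bar>
        \<le> \<bar>poly (P k) t\<bar> * \<bar>poly (Q k) t - g t\<bar> + \<bar>g t\<bar> * \<bar>poly (P k) t - f t\<bar>"
      by (metis abs_mult abs_triangle_ineq)
    also have "\<dots> \<le> (Bf + 1) * \<bar>poly (Q k) t - g t\<bar> + Bg * \<bar>poly (P k) t - f t\<bar>"
      by (intro add_mono mult_right_mono bp Bg(2)[OF t]) auto
    also have "\<dots> < (Bf + 1) * \<delta> + Bg * \<delta>"
    proof (rule add_less_le_mono)
      show "(Bf + 1) * \<bar>poly (Q k) t - g t\<bar> < (Bf + 1) * \<delta>"
        using eq Bf(1) by (intro mult_strict_left_mono) auto
      show "Bg * \<bar>poly (P k) t - f t\<bar> \<le> Bg * \<delta>"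
        using ep Bg(1) by (intro mult_left_mono) auto
    qed
    finally show "\<bar>poly (P k * Q k) t - f t * g t\<bar> < (Bf + 1 + Bg) * inverse (real (Suc k))"
      by (simp add: \<delta>_def algebra_simps)
  qed
  ultimately show ?thesis using LIMSEQ_unique by blast
qed

lemma fcalc_pos:
  fixes T :: "'a::{real_inner,complete_space} \<Rightarrow>\<^sub>L 'a"
  assumes nt: "\<exists>x::'a. x \<noteq> 0" and sa: "self_adjoint T"
    and cf: "continuous_on {num_lo T..num_hi T} f"
    and nn: "\<And>t. t \<in> {num_lo T..num_hi T} \<Longrightarrow> 0 \<le> f t"
  shows "pos (fcalc f T)"
proof -
  obtain P where P: "\<And>k t. t\<in>{num_lo T..num_hi T} \<Longrightarrow> \<bar>poly (P k) t - f t\<bar> < inverse (real (Suc k))"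
    using approx_seq[OF cf] by blast
  define Q where "Q k = P k + [:inverse (real (Suc k)):]" for k
  have l: "(\<lambda>k. poly_op (Q k) T) \<longlonglongrightarrow> fcalc f T"
  proof (rule fcalc_tendsto[OF nt sa cf])
    show "(\<lambda>k. 2 * inverse (real (Suc k))) \<longlonglongrightarrow> 0"
      using tendsto_mult_right_zero[OF LIMSEQ_inverse_real_of_nat, of 2] by simp
    fix k t assume t: "t \<in> {num_lo T..num_hi T}"
    show "\<bar>poly (Q k) t - f t\<bar> < 2 * inverse (real (Suc k))"
      using P[OF t, of k] by (simp add: Q_def abs_less_iff)
  qed
  have pk: "pos (poly_op (Q k) T)" for k
  proof (rule poly_pos[OF nt sa])
    fix t assume "num_lo T \<le> t" "t \<le> num_hi T"
    then have t: "t \<in> {num_lo T..num_hi T}" by simp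
    show "0 \<le> poly (Q k) t" using P[OF t, of k] nn[OF t] by (simp add: Q_def abs_less_iff)
  qed
  show ?thesis unfolding pos_def
  proof
    fix x
    have "(\<lambda>k. inner (poly_op (Q k) T x) x) \<longlonglongrightarrow> inner (fcalc f T x) x"
      by (intro tendsto_inner blinfun.tendsto[OF l] tendsto_const)
    then show "0 \<le> inner (fcalc f T x) x"
      by (rule LIMSEQ_le_const) (use pk in \<open>auto simp: pos_def\<close>)
  qed
qed

lemma fcalc_sa:
  fixes T :: "'a::{real_inner,complete_space} \<Rightarrow>\<^sub>L 'a"
  assumes nt: "\<exists>x::'a. x \<noteq> 0" and sa: "self_adjoint T"
    and cf: "continuous_on {num_lo T..num_hi T} f"
  shows "self_adjoint (fcalc f T)"
proof -
  obtain P where P: "\<And>k t. t\<in>{num_lo T..num_hi T} \<Longrightarrow> \<bar>poly (P k) t - f t\<bar> < inverse (real (Suc k))"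
    using approx_seq[OF cf] by blast
  have l: "(\<lambda>k. poly_op (P k) T) \<longlonglongrightarrow> fcalc f T"
    by (rule fcalc_tendsto[OF nt sa cf P LIMSEQ_inverse_real_of_nat])
  show ?thesis unfolding self_adjoint_def
  proof (intro allI)
    fix x y
    have a: "(\<lambda>k. inner (poly_op (P k) T x) y) \<longlonglongrightarrow> inner (fcalc f T x) y"
      by (intro tendsto_inner blinfun.tendsto[OF l] tendsto_const)
    have b: "(\<lambda>k. inner x (poly_op (P k) T y)) \<longlonglongrightarrow> inner x (fcalc f T y)"
      by (intro tendsto_inner blinfun.tendsto[OF l] tendsto_const)
    have "(\<lambda>k. inner (poly_op (P k) T x) y) = (\<lambda>k. inner x (poly_op (P k) T y))"
      using sa_poly_op[OF sa] by (simp add: self_adjoint_def)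
    then show "inner (fcalc f T x) y = inner x (fcalc f T y)"
      using a b LIMSEQ_unique by metis
  qed
qed

lemma sp_lower:
  fixes A :: "'a::real_inner \<Rightarrow>\<^sub>L 'a"
  assumes "strictly_pos A"
  shows "\<exists>c>0. \<forall>x. c * (norm x)^2 \<le> inner (A x) x"
proof -
  have sa: "self_adjoint A" and pA: "pos A" and inv: "op_invertible A"
    using assms by (auto simp: strictly_pos_def pos_def)
  obtain S where S: "S o\<^sub>L A = id_blinfun" using inv by (auto simp: op_invertible_def)
  define K where "K = (norm S)^2 * norm A"
  have K0: "K \<ge> 0" by (simp add: K_def)
  have main: "(norm x)^2 \<le> K * inner (A x) x" for x
  proof -
    have ax: "0 \<le> inner (A x) x" using pA by (simp add: pos_def)
    have cs: "(inner (A x) (A x))^2 \<le> inner (A x) x * inner (A (A x)) (A x)"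
      by (rule pos_CS[OF sa pA])
    have "inner (A (A x)) (A x) \<le> norm A * (norm (A x))^2"
      using inner_T_bound[of A "A x"] by simp
    then have "(inner (A x) (A x))^2 \<le> inner (A x) x * (norm A * inner (A x) (A x))"
      using cs ax by (metis mult_left_mono order_trans power2_norm_eq_inner)
    then have ax2: "inner (A x) (A x) \<le> norm A * inner (A x) x"
    proof (cases "inner (A x) (A x) = 0")
      case True then show ?thesis using ax by simp
    next
      case False
      then have p: "inner (A x) (A x) > 0" by (simp add: order_less_le)
      assume h: "(inner (A x) (A x))^2 \<le> inner (A x) x * (norm A * inner (A x) (A x))"
      then have "inner (A x) (A x) * inner (A x) (A x) \<le> (norm A * inner (A x) x) * inner (A x) (A x)"
        by (simp add: power2_eq_square algebra_simps)
      then show ?thesis using p by simp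
    qed
    have "norm x = norm (S (A x))" using S by (metis blinfun_apply_blinfun_compose blinfun_apply_id_blinfun)
    also have "\<dots> \<le> norm S * norm (A x)" by (rule norm_blinfun)
    finally have "(norm x)^2 \<le> (norm S * norm (A x))^2" by (simp add: power_mono)
    also have "\<dots> = (norm S)^2 * inner (A x) (A x)" by (simp add: power_mult_distrib power2_norm_eq_inner)
    also have "\<dots> \<le> (norm S)^2 * (norm A * inner (A x) x)" by (rule mult_left_mono[OF ax2]) simp
    finally show ?thesis by (simp add: K_def mult.assoc)
  qed
  show ?thesis
  proof (intro exI[of _ "1 / (K + 1)"] conjI allI)
    show "0 < 1 / (K + 1)" using K0 by simp
    fix x
    have "(norm x)^2 \<le> (K + 1) * inner (A x) x"
      using main[of x] pA by (simp add: pos_def distrib_right add_increasing2)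
    then show "1 / (K + 1) * (norm x)^2 \<le> inner (A x) x" using K0 by (simp add: field_simps)
  qed
qed

lemma num_lo_ge:
  fixes T :: "'a::real_inner \<Rightarrow>\<^sub>L 'a"
  assumes nt: "\<exists>x::'a. x \<noteq> 0" and c: "\<And>x. c * (norm x)^2 \<le> inner (T x) x"
  shows "c \<le> num_lo T"
  unfolding num_lo_def
proof (rule cInf_greatest)
  obtain y :: 'a where y: "y \<noteq> 0" using nt by blast
  show "{inner (T x) x |x. norm x = 1} \<noteq> {}" using y by (auto intro!: exI[of _ "y /\<^sub>R norm y"])
  fix v assume "v \<in> {inner (T x) x |x. norm x = 1}"
  then obtain x where "v = inner (T x) x" "norm x = 1" by blast
  then show "c \<le> v" using c[of x] by simp
qed

lemma triv_le:
  assumes "\<not> (\<exists>x::'a. x \<noteq> 0)"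
  shows "op_le (X :: 'a::real_inner \<Rightarrow>\<^sub>L 'a) Y"
  unfolding op_le_def
proof
  fix x :: 'a
  have "x = 0" using assms by blast
  then show "0 \<le> inner ((Y - X) x) x" by simp
qed

lemma op_le_sum:
  assumes "\<And>j. j \<in> S \<Longrightarrow> op_le (X j) (Y j)"
  shows "op_le (\<Sum>j\<in>S. X j) (\<Sum>j\<in>S. Y j)"
  unfolding op_le_def
proof
  fix x
  have "inner (((\<Sum>j\<in>S. Y j) - (\<Sum>j\<in>S. X j)) x) x = (\<Sum>j\<in>S. inner ((Y j - X j) x) x)"
    by (simp add: blinfun.diff_left blinfun.sum_left inner_sum_left inner_diff_left sum_subtractf)
  also have "\<dots> \<ge> 0" using assms by (intro sum_nonneg) (simp add: op_le_def)
  finally show "0 \<le> inner (((\<Sum>j\<in>S. Y j) - (\<Sum>j\<in>S. X j)) x) x" .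
qed

lemma conj_le:
  assumes "self_adjoint R" "pos (Y - X)"
  shows "op_le (R o\<^sub>L X o\<^sub>L R) (R o\<^sub>L Y o\<^sub>L R)"
  unfolding op_le_def
proof
  fix x
  have "inner (R ((Y - X) (R x))) x = inner ((Y - X) (R x)) (R x)"
    using assms(1) unfolding self_adjoint_def by blast
  moreover have "((R o\<^sub>L Y o\<^sub>L R) - (R o\<^sub>L X o\<^sub>L R)) x = R ((Y - X) (R x))"
    by (simp only: blinfun.diff_left blinfun.diff_right blinfun_apply_blinfun_compose)
  ultimately have "inner (((R o\<^sub>L Y o\<^sub>L R) - (R o\<^sub>L X o\<^sub>L R)) x) x = inner ((Y - X) (R x)) (R x)"
    by simp
  then show "0 \<le> inner (((R o\<^sub>L Y o\<^sub>L R) - (R o\<^sub>L X o\<^sub>L R)) x) x"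
    using assms(2) by (simp add: pos_def)
qed

lemma scalar_ineq:
  fixes t l a b :: real
  assumes t: "t > 0" and l: "l > 0" and b: "b = a + l"
  shows "t powr a * ln t \<le> (t powr b - t powr a) / l"
    and "(t powr b - t powr a) / l \<le> t powr b * ln t"
proof -
  define y where "y = t powr l"
  have y0: "y > 0" using t by (simp add: y_def)
  have lny: "ln y = l * ln t" using t by (simp add: y_def ln_powr)
  have tb: "t powr b = t powr a * y" using t by (simp add: b y_def powr_add)
  have ta: "t powr a > 0" using t by simp
  have i1: "ln y \<le> y - 1" using y0 by (rule ln_le_minus_one)
  have "ln (1 / y) \<le> 1 / y - 1" using y0 by (intro ln_le_minus_one) simp
  then have i2: "1 - 1 / y \<le> ln y" using y0 by (simp add: ln_div)
  have "ln t \<le> (y - 1) / l" using i1 lny l by (simp add: field_simps)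
  then have "t powr a * ln t \<le> t powr a * ((y - 1) / l)" by (rule mult_left_mono) (use ta in auto)
  then show "t powr a * ln t \<le> (t powr b - t powr a) / l" by (simp add: tb algebra_simps)
  have "y - 1 \<le> y * ln y" using i2 y0 by (simp add: field_simps)
  then have "(y - 1) / l \<le> y * ln t" using lny l by (simp add: field_simps)
  then have "t powr a * ((y - 1) / l) \<le> t powr a * (y * ln t)" by (rule mult_left_mono) (use ta in auto)
  then show "(t powr b - t powr a) / l \<le> t powr b * ln t" by (simp add: tb algebra_simps)
qed

lemma sp_facts:
  fixes A :: "'a::{real_inner,complete_space} \<Rightarrow>\<^sub>L 'a"
  assumes nt: "\<exists>x::'a. x \<noteq> 0" and sp: "strictly_pos A"
  shows "self_adjoint A" "0 < num_lo A"
proof -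
  show "self_adjoint A" using sp by (simp add: strictly_pos_def)
  obtain c where "c > 0" "\<And>x. c * (norm x)^2 \<le> inner (A x) x" using sp_lower[OF sp] by blast
  then show "0 < num_lo A" using num_lo_ge[OF nt] by fastforce
qed

lemma cont_pos:
  assumes "continuous_on {0<..} f" "0 < a"
  shows "continuous_on {a..b} (f :: real \<Rightarrow> real)"
  by (rule continuous_on_subset[OF assms(1)]) (use assms(2) in auto)

lemma cont_powr_pos: "continuous_on {0<..} (\<lambda>t::real. t powr e)"
  by (intro continuous_intros) auto

lemma cont_ln_pos: "continuous_on {0<..} (\<lambda>t::real. ln t)"
  by (intro continuous_intros) auto

lemma R_Rm:
  fixes A :: "'a::{real_inner,complete_space} \<Rightarrow>\<^sub>L 'a"
  assumes nt: "\<exists>x::'a. x \<noteq> 0" and sp: "strictly_pos A"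
  shows "op_rpow A (1/2) o\<^sub>L op_rpow A (-1/2) = id_blinfun"
proof -
  note f = sp_facts[OF nt sp]
  have "op_rpow A (1/2) o\<^sub>L op_rpow A (-1/2) = fcalc (\<lambda>t. t powr (1/2) * t powr (-1/2)) A"
    unfolding op_rpow_def
    by (rule fcalc_mult[symmetric, OF nt f(1) cont_pos[OF cont_powr_pos f(2)] cont_pos[OF cont_powr_pos f(2)]])
  also have "\<dots> = fcalc (poly [:1:]) A"
  proof (rule fcalc_cong)
    fix t assume "t \<in> {num_lo A..num_hi A}"
    then have "t > 0" using f(2) by simp
    then show "t powr (1/2) * t powr (-1/2) = poly [:1:] t" by (simp add: powr_add[symmetric])
  qed
  also have "\<dots> = id_blinfun" by (simp add: fcalc_poly[OF nt f(1)])
  finally show ?thesis .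
qed

lemma C_facts:
  fixes A B :: "'a::{real_inner,complete_space} \<Rightarrow>\<^sub>L 'a"
  assumes nt: "\<exists>x::'a. x \<noteq> 0" and spA: "strictly_pos A" and spB: "strictly_pos B"
  defines "C \<equiv> op_rpow A (-1/2) o\<^sub>L B o\<^sub>L op_rpow A (-1/2)"
  shows "self_adjoint C" "0 < num_lo C"
proof -
  note f = sp_facts[OF nt spA]
  define Rm where "Rm = op_rpow A (-1/2)"
  define R where "R = op_rpow A (1/2)"
  have saRm: "self_adjoint Rm" unfolding Rm_def op_rpow_def
    by (rule fcalc_sa[OF nt f(1) cont_pos[OF cont_powr_pos f(2)]])
  have saB: "self_adjoint B" using spB by (simp add: strictly_pos_def)
  have RRm: "R (Rm x) = x" for x using R_Rm[OF nt spA]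
    unfolding R_def Rm_def by (metis blinfun_apply_blinfun_compose blinfun_apply_id_blinfun)
  show "self_adjoint C"
    unfolding self_adjoint_def
  proof (intro allI)
    fix x y
    have "inner (C x) y = inner (B (Rm x)) (Rm y)"
      using saRm unfolding C_def Rm_def[symmetric] self_adjoint_def by simp
    also have "\<dots> = inner (Rm x) (B (Rm y))" using saB by (simp add: self_adjoint_def)
    also have "\<dots> = inner x (C y)"
      using saRm unfolding C_def Rm_def[symmetric] self_adjoint_def by simp
    finally show "inner (C x) y = inner x (C y)" .
  qed
  obtain c where c: "c > 0" "\<And>x. c * (norm x)^2 \<le> inner (B x) x" using sp_lower[OF spB] by blast
  define c' where "c' = c / ((norm R)^2 + 1)"
  have np: "(norm R)^2 + 1 > 0" by (simp add: add_nonneg_pos)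
  then have c': "c' > 0" using c(1) unfolding c'_def by (rule divide_pos_pos[rotated])
  have "c' * (norm x)^2 \<le> inner (C x) x" for x
  proof -
    have "norm x = norm (R (Rm x))" by (simp add: RRm)
    also have "\<dots> \<le> norm R * norm (Rm x)" by (rule norm_blinfun)
    finally have "(norm x)^2 \<le> (norm R * norm (Rm x))^2" by (simp add: power_mono)
    also have "\<dots> \<le> ((norm R)^2 + 1) * (norm (Rm x))^2"
      by (simp add: power_mult_distrib distrib_right)
    finally have h: "(norm x)^2 \<le> ((norm R)^2 + 1) * (norm (Rm x))^2" .
    have "c' * (norm x)^2 \<le> c' * (((norm R)^2 + 1) * (norm (Rm x))^2)"
      using h c' by (simp add: mult_left_mono)
    also have "\<dots> = c * (norm (Rm x))^2" using np by (simp add: c'_def)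
    also have "\<dots> \<le> inner (B (Rm x)) (Rm x)" by (rule c(2))
    also have "\<dots> = inner (C x) x"
      using saRm unfolding C_def Rm_def[symmetric] self_adjoint_def by simp
    finally show ?thesis .
  qed
  then show "0 < num_lo C" using num_lo_ge[OF nt] c' by fastforce
qed

lemma key_le:
  fixes A B :: "'a::{real_inner,complete_space} \<Rightarrow>\<^sub>L 'a"
  assumes nt: "\<exists>x::'a. x \<noteq> 0" and spA: "strictly_pos A" and spB: "strictly_pos B"
    and cf: "continuous_on {0<..} f" and cg: "continuous_on {0<..} g"
    and fg: "\<And>t. t > 0 \<Longrightarrow> f t \<le> g t"
  shows "op_le (op_rpow A (1/2) o\<^sub>L fcalc f (op_rpow A (-1/2) o\<^sub>L B o\<^sub>L op_rpow A (-1/2)) o\<^sub>L op_rpow A (1/2))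
               (op_rpow A (1/2) o\<^sub>L fcalc g (op_rpow A (-1/2) o\<^sub>L B o\<^sub>L op_rpow A (-1/2)) o\<^sub>L op_rpow A (1/2))"
proof -
  define C where "C = op_rpow A (-1/2) o\<^sub>L B o\<^sub>L op_rpow A (-1/2)"
  note Cf = C_facts[OF nt spA spB, folded C_def]
  note Af = sp_facts[OF nt spA]
  have saR: "self_adjoint (op_rpow A (1/2))" unfolding op_rpow_def
    by (rule fcalc_sa[OF nt Af(1) cont_pos[OF cont_powr_pos Af(2)]])
  have "pos (fcalc (\<lambda>t. g t - f t) C)"
  proof (rule fcalc_pos[OF nt Cf(1)])
    show "continuous_on {num_lo C..num_hi C} (\<lambda>t. g t - f t)"
      by (rule cont_pos[OF continuous_on_diff[OF cg cf] Cf(2)])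
    fix t assume "t \<in> {num_lo C..num_hi C}"
    then have "t > 0" using Cf(2) by simp
    then show "0 \<le> g t - f t" using fg by simp
  qed
  also have "fcalc (\<lambda>t. g t - f t) C = fcalc g C - fcalc f C"
    by (rule fcalc_diff[OF nt Cf(1) cont_pos[OF cg Cf(2)] cont_pos[OF cf Cf(2)]])
  finally have "pos (fcalc g C - fcalc f C)" .
  then show ?thesis unfolding C_def[symmetric] by (rule conj_le[OF saR])
qed

lemma compose_assoc: "(X o\<^sub>L Y) o\<^sub>L Z = X o\<^sub>L (Y o\<^sub>L Z)"
  by (rule blinfun_eqI) simp

lemma rel_eq:
  fixes A B :: "'a::{real_inner,complete_space} \<Rightarrow>\<^sub>L 'a"
  assumes nt: "\<exists>x::'a. x \<noteq> 0" and spA: "strictly_pos A" and spB: "strictly_pos B"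
  shows "rel_entropy \<nu> A B = op_rpow A (1/2) o\<^sub>L fcalc (\<lambda>t. t powr \<nu> * ln t) (op_rpow A (-1/2) o\<^sub>L B o\<^sub>L op_rpow A (-1/2)) o\<^sub>L op_rpow A (1/2)"
proof -
  define C where "C = op_rpow A (-1/2) o\<^sub>L B o\<^sub>L op_rpow A (-1/2)"
  note Cf = C_facts[OF nt spA spB, folded C_def]
  have "fcalc (\<lambda>t. t powr \<nu> * ln t) C = op_rpow C \<nu> o\<^sub>L op_log C"
    unfolding op_rpow_def op_log_def
    by (rule fcalc_mult[OF nt Cf(1) cont_pos[OF cont_powr_pos Cf(2)] cont_pos[OF cont_ln_pos Cf(2)]])
  then show ?thesis
    unfolding rel_entropy_def Let_def C_def[symmetric] by (simp add: compose_assoc)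
qed

lemma gts_eq:
  fixes A B :: "'a::{real_inner,complete_space} \<Rightarrow>\<^sub>L 'a"
  assumes nt: "\<exists>x::'a. x \<noteq> 0" and spA: "strictly_pos A" and spB: "strictly_pos B"
  shows "gtsallis \<mu> k l A B = op_rpow A (1/2) o\<^sub>L fcalc (\<lambda>t. (1/l) * (t powr (\<mu> + of_int k * l) - t powr (\<mu> + (of_int k - 1) * l))) (op_rpow A (-1/2) o\<^sub>L B o\<^sub>L op_rpow A (-1/2)) o\<^sub>L op_rpow A (1/2)"
proof -
  define C where "C = op_rpow A (-1/2) o\<^sub>L B o\<^sub>L op_rpow A (-1/2)"
  define R where "R = op_rpow A (1/2)"
  define a where "a = \<mu> + of_int k * l"
  define b where "b = \<mu> + (of_int k - 1) * l"
  note Cf = C_facts[OF nt spA spB, folded C_def]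
  have "fcalc (\<lambda>t. (1/l) * (t powr a - t powr b)) C = (1/l) *\<^sub>R fcalc (\<lambda>t. t powr a - t powr b) C"
    by (rule fcalc_scale[OF nt Cf(1) cont_pos[OF continuous_on_diff[OF cont_powr_pos cont_powr_pos] Cf(2)]])
  also have "fcalc (\<lambda>t. t powr a - t powr b) C = op_rpow C a - op_rpow C b"
    unfolding op_rpow_def
    by (rule fcalc_diff[OF nt Cf(1) cont_pos[OF cont_powr_pos Cf(2)] cont_pos[OF cont_powr_pos Cf(2)]])
  finally have e: "fcalc (\<lambda>t. (1/l) * (t powr a - t powr b)) C = (1/l) *\<^sub>R (op_rpow C a - op_rpow C b)" .
  have "gtsallis \<mu> k l A B = (1/l) *\<^sub>R ((R o\<^sub>L op_rpow C a o\<^sub>L R) - (R o\<^sub>L op_rpow C b o\<^sub>L R))"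
    unfolding gtsallis_def wgmean_def C_def[symmetric] R_def[symmetric] a_def b_def ..
  also have "\<dots> = R o\<^sub>L ((1/l) *\<^sub>R (op_rpow C a - op_rpow C b)) o\<^sub>L R"
    by (rule blinfun_eqI) (simp add: blinfun.diff_left blinfun.scaleR_left blinfun.diff_right blinfun.scaleR_right)
  finally have X: "gtsallis \<mu> k l A B = R o\<^sub>L ((1/l) *\<^sub>R (op_rpow C a - op_rpow C b)) o\<^sub>L R" .
  show ?thesis unfolding a_def[symmetric] b_def[symmetric] C_def[symmetric] R_def[symmetric] e by (rule X)
qed

lemma per_j:
  fixes A B :: "'a::{real_inner,complete_space} \<Rightarrow>\<^sub>L 'a"
  assumes nt: "\<exists>x::'a. x \<noteq> 0" and spA: "strictly_pos A" and spB: "strictly_pos B"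
    and a: "a = \<mu> + of_int k * l" and b: "b = \<mu> + (of_int k - 1) * l"
  shows "l > 0 \<Longrightarrow> op_le (rel_entropy b A B) (gtsallis \<mu> k l A B)"
    and "l > 0 \<Longrightarrow> op_le (gtsallis \<mu> k l A B) (rel_entropy a A B)"
    and "l < 0 \<Longrightarrow> op_le (rel_entropy a A B) (gtsallis \<mu> k l A B)"
    and "l < 0 \<Longrightarrow> op_le (gtsallis \<mu> k l A B) (rel_entropy b A B)"
proof -
  have cr: "continuous_on {0<..} (\<lambda>t::real. t powr \<nu> * ln t)" for \<nu> :: real
    by (rule continuous_on_mult[OF cont_powr_pos cont_ln_pos])
  have cg: "continuous_on {0<..} (\<lambda>t::real. (1/l) * (t powr (\<mu> + of_int k * l) - t powr (\<mu> + (of_int k - 1) * l)))"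
    by (intro continuous_on_mult continuous_on_const continuous_on_diff cont_powr_pos)
  note K = key_le[OF nt spA spB]
  note RE = rel_eq[OF nt spA spB]
  note GE = gts_eq[OF nt spA spB]
  {
    assume l: "l > 0"
    have ab: "a = b + l" using a b by (simp add: algebra_simps)
    have g: "(1/l) * (t powr (\<mu> + of_int k * l) - t powr (\<mu> + (of_int k - 1) * l)) = (t powr a - t powr b) / l" for t
      using a b by simp
    show "op_le (rel_entropy b A B) (gtsallis \<mu> k l A B)"
      unfolding RE GE
    proof (rule K[OF cr cg])
      fix t :: real assume t: "t > 0"
      show "t powr b * ln t \<le> (1/l) * (t powr (\<mu> + of_int k * l) - t powr (\<mu> + (of_int k - 1) * l))"
        unfolding g by (rule scalar_ineq(1)[OF t l ab])
    qed
    show "op_le (gtsallis \<mu> k l A B) (rel_entropy a A B)"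
      unfolding RE GE
    proof (rule K[OF cg cr])
      fix t :: real assume t: "t > 0"
      show "(1/l) * (t powr (\<mu> + of_int k * l) - t powr (\<mu> + (of_int k - 1) * l)) \<le> t powr a * ln t"
        unfolding g by (rule scalar_ineq(2)[OF t l ab])
    qed
  }
  {
    assume l: "l < 0"
    have l': "-l > 0" using l by simp
    have ab: "b = a + -l" using a b by (simp add: algebra_simps)
    have g: "(1/l) * (t powr (\<mu> + of_int k * l) - t powr (\<mu> + (of_int k - 1) * l)) = (t powr b - t powr a) / (-l)" for t
    proof -
      have "(1/l) * (t powr a - t powr b) = (t powr b - t powr a) / (-l)" using l by (simp add: field_simps)
      then show ?thesis by (simp only: a b)
    qed
    show "op_le (rel_entropy a A B) (gtsallis \<mu> k l A B)"
      unfolding RE GE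
    proof (rule K[OF cr cg])
      fix t :: real assume t: "t > 0"
      show "t powr a * ln t \<le> (1/l) * (t powr (\<mu> + of_int k * l) - t powr (\<mu> + (of_int k - 1) * l))"
        unfolding g by (rule scalar_ineq(1)[OF t l' ab])
    qed
    show "op_le (gtsallis \<mu> k l A B) (rel_entropy b A B)"
      unfolding RE GE
    proof (rule K[OF cg cr])
      fix t :: real assume t: "t > 0"
      show "(1/l) * (t powr (\<mu> + of_int k * l) - t powr (\<mu> + (of_int k - 1) * l)) \<le> t powr b * ln t"
        unfolding g by (rule scalar_ineq(2)[OF t l' ab])
    qed
  }
qed

theorem corollary4:
  fixes A B :: "nat \<Rightarrow> ('a::{real_inner, complete_space} \<Rightarrow>\<^sub>L 'a)"
    and n :: nat and \<mu> l :: real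
  assumes "\<forall>j\<in>{1..n}. strictly_pos (A j)"
    and "\<forall>j\<in>{1..n}. strictly_pos (B j)"
    and "(\<Sum>j=1..n. A j) = id_blinfun"
    and "(\<Sum>j=1..n. B j) = id_blinfun"
    and "l > 0"
  shows "op_le (\<Sum>j=1..n. rel_entropy (\<mu> - 2*l) (A j) (B j)) (\<Sum>j=1..n. gtsallis \<mu> 2 (-l) (A j) (B j))
       \<and> op_le (\<Sum>j=1..n. gtsallis \<mu> 2 (-l) (A j) (B j)) (\<Sum>j=1..n. rel_entropy (\<mu> - l) (A j) (B j))
       \<and> op_le (\<Sum>j=1..n. rel_entropy (\<mu> - l) (A j) (B j)) (\<Sum>j=1..n. gtsallis \<mu> 1 (-l) (A j) (B j))
       \<and> op_le (\<Sum>j=1..n. gtsallis \<mu> 1 (-l) (A j) (B j)) (\<Sum>j=1..n. rel_entropy \<mu> (A j) (B j))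
       \<and> op_le (\<Sum>j=1..n. rel_entropy \<mu> (A j) (B j)) (\<Sum>j=1..n. gtsallis \<mu> 1 l (A j) (B j))
       \<and> op_le (\<Sum>j=1..n. gtsallis \<mu> 1 l (A j) (B j)) (\<Sum>j=1..n. rel_entropy (\<mu> + l) (A j) (B j))
       \<and> op_le (\<Sum>j=1..n. rel_entropy (\<mu> + l) (A j) (B j)) (\<Sum>j=1..n. gtsallis \<mu> 2 l (A j) (B j))
       \<and> op_le (\<Sum>j=1..n. gtsallis \<mu> 2 l (A j) (B j)) (\<Sum>j=1..n. rel_entropy (\<mu> + 2*l) (A j) (B j))"
proof (cases "\<exists>x::'a. x \<noteq> 0")
  case False
  then show ?thesis by (simp add: triv_le)
next
  case True
  note nt = True
  have spA: "strictly_pos (A j)" if "j \<in> {1..n}" for j using assms(1) that by blast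
  have spB: "strictly_pos (B j)" if "j \<in> {1..n}" for j using assms(2) that by blast
  have l: "l > 0" "-l < 0" using assms(5) by auto
  show ?thesis
  proof (intro conjI; rule op_le_sum)
    fix j assume j: "j \<in> {1..n}"
    note P = per_j[OF nt spA[OF j] spB[OF j]]
    show "op_le (rel_entropy (\<mu> - 2*l) (A j) (B j)) (gtsallis \<mu> 2 (-l) (A j) (B j))"
      by (rule P(3)[where a="\<mu> - 2*l" and b="\<mu> - l"]) (use l in simp_all)
    show "op_le (gtsallis \<mu> 2 (-l) (A j) (B j)) (rel_entropy (\<mu> - l) (A j) (B j))"
      by (rule P(4)[where a="\<mu> - 2*l" and b="\<mu> - l"]) (use l in simp_all)
    show "op_le (rel_entropy (\<mu> - l) (A j) (B j)) (gtsallis \<mu> 1 (-l) (A j) (B j))"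
      by (rule P(3)[where a="\<mu> - l" and b="\<mu>"]) (use l in simp_all)
    show "op_le (gtsallis \<mu> 1 (-l) (A j) (B j)) (rel_entropy \<mu> (A j) (B j))"
      by (rule P(4)[where a="\<mu> - l" and b="\<mu>"]) (use l in simp_all)
    show "op_le (rel_entropy \<mu> (A j) (B j)) (gtsallis \<mu> 1 l (A j) (B j))"
      by (rule P(1)[where a="\<mu> + l" and b="\<mu>"]) (use l in simp_all)
    show "op_le (gtsallis \<mu> 1 l (A j) (B j)) (rel_entropy (\<mu> + l) (A j) (B j))"
      by (rule P(2)[where a="\<mu> + l" and b="\<mu>"]) (use l in simp_all)
    show "op_le (rel_entropy (\<mu> + l) (A j) (B j)) (gtsallis \<mu> 2 l (A j) (B j))"
      by (rule P(1)[where a="\<mu> + 2*l" and b="\<mu> + l"]) (use l in simp_all)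
    show "op_le (gtsallis \<mu> 2 l (A j) (B j)) (rel_entropy (\<mu> + 2*l) (A j) (B j))"
      by (rule P(2)[where a="\<mu> + 2*l" and b="\<mu> + l"]) (use l in simp_all)
  qed
qed


end
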